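(* Let $n>l\ge0$ be integers and let $x,y$ be complex numbers. Then $$\frac{n-l+1}2\sum_{k=\delta_{l,0}}^{n}\binom nk\binom n{k+l-1}E_{k+l-1}(x)E_{n-k}(y)=\sum_{k=0}^n\binom nk\binom{k+n}{k+l}\left((-1)^{n-k}B_{k+l}(x)-B_{k+l}(y)\right)E_{n-k}(x-y)$$ and $$\frac{n-l}n\sum_{k=0}^{n-l}\binom nk\binom n{k+l}B_{k+l}(x)B_{n-k}(y)=\sum_{k=0}^n\binom nk\binom{k+n-1}{k+l}\left((-1)^{n-k}B_{k+l}(x)+B_{k+l}(y)\right)B_{n-k}(x-y).$$ In particular, $$\frac{(n+1)(n+1-l)}8\sum_{k=\delta_{l,0}}^n\binom nk\binom n{k+l-1}E_{k+l-1}(x)E_{n-k}(x)=\sum_{k=0}^{n-1}\binom{n+1}k\binom{k+n}{k+l}B_{k+l}(x)\left(2^{n-k+1}-1\right)B_{n-k+1}$$ and $$\sum_{k=0}^{n-l}\binom nk\binom n{k+l}B_{k+l}(x)B_{n-k}(x)=\frac{2n}{n-l}\sum_{0\le k\le n,\ k\ne n-1}\binom nk\binom {k+n-1}{k+l}B_{k+l}(x)B_{n-k}.$$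
   Context: $\delta_{l,0}$ equals $1$ if $l=0$ and $0$ otherwise. Bernoulli numbers are defined by $B_0=1$ and $\sum_{k=0}^n\binom{n+1}kB_k=0$ for $n\ge1$; Euler numbers by $E_0=1$ and $\sum_{0\le k\le n,\,2\mid n-k}\binom nkE_k=0$ for $n\ge1$. The Bernoulli polynomials are $B_n(x)=\sum_{k=0}^n\binom nkB_kx^{n-k}$ and the Euler polynomials are $E_n(x)=\sum_{k=0}^n\binom nk\frac{E_k}{2^k}(x-\frac12)^{n-k}$. *)

theory Defs
  imports Complex_Main
begin

function bernoulli_num :: "nat \<Rightarrow> rat" where
  "bernoulli_num n = (if n = 0 then 1
     else - (\<Sum>k<n. of_nat (Suc n choose k) * bernoulli_num k) / of_nat (Suc n))"
  by auto
termination by (relation "measure id") auto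

function euler_num :: "nat \<Rightarrow> int" where
  "euler_num n = (if n = 0 then 1
     else - (\<Sum>k\<in>{k. k < n \<and> even (n - k)}. of_nat (n choose k) * euler_num k))"
  by auto
termination by (relation "measure id") auto

definition bernoulli_poly :: "nat \<Rightarrow> complex \<Rightarrow> complex" where
  "bernoulli_poly n x = (\<Sum>k\<le>n. of_nat (n choose k) * of_rat (bernoulli_num k) * x ^ (n - k))"

definition euler_poly :: "nat \<Rightarrow> complex \<Rightarrow> complex" where
  "euler_poly n x = (\<Sum>k\<le>n. of_nat (n choose k) * (of_int (euler_num k) / 2 ^ k) * (x - 1/2) ^ (n - k))"

end

theory Submission
  imports Defs "HOL-Analysis.Analysis"
begin


declare bernoulli_num.simps[simp del] euler_num.simps[simp del]

abbreviation B where "B \<equiv> bernoulli_poly"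
abbreviation E where "E \<equiv> euler_poly"
abbreviation bn :: "nat \<Rightarrow> complex" where "bn k \<equiv> of_rat (bernoulli_num k)"

lemma bn0: "bernoulli_num 0 = 1" by (subst bernoulli_num.simps) simp
lemma bn1: "bernoulli_num 1 = -1/2" by (subst bernoulli_num.simps) (simp add: bn0)
lemma en0: "euler_num 0 = 1" by (subst euler_num.simps) simp
lemma en1: "euler_num 1 = 0"
proof -
  have "{k. k < (1::nat) \<and> even (1 - k)} = {}" by auto
  thus ?thesis by (subst euler_num.simps, subst \<open>{k. k < (1::nat) \<and> even (1 - k)} = {}\<close>) simp
qed

lemma bn_rec: assumes "n \<ge> 1" shows "(\<Sum>k\<le>n. of_nat (Suc n choose k) * bernoulli_num k) = 0"
proof -
  have "bernoulli_num n = - (\<Sum>k<n. of_nat (Suc n choose k) * bernoulli_num k) / of_nat (Suc n)"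
    using assms by (subst bernoulli_num.simps) simp
  hence "of_nat (Suc n) * bernoulli_num n = - (\<Sum>k<n. of_nat (Suc n choose k) * bernoulli_num k)"
    by (simp add: field_simps del: of_nat_Suc)
  moreover have "(\<Sum>k\<le>n. of_nat (Suc n choose k) * bernoulli_num k) = (\<Sum>k<n. of_nat (Suc n choose k) * bernoulli_num k) + of_nat (Suc n) * bernoulli_num n"
    by (simp add: lessThan_Suc_atMost[symmetric] del: of_nat_Suc)
  ultimately show ?thesis by simp
qed

lemma en_odd: "odd n \<Longrightarrow> euler_num n = 0"
proof (induction n rule: less_induct)
  case (less n)
  have "(\<Sum>k\<in>{k. k < n \<and> even (n - k)}. of_nat (n choose k) * euler_num k) = 0"
  proof (rule sum.neutral, clarify)
    fix k assume "k < n" "even (n - k)"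
    hence "odd k" using less.prems by (metis dvd_diff_nat even_add le_add_diff_inverse2 less_imp_le_nat)
    thus "of_nat (n choose k) * euler_num k = 0" using less.IH \<open>k<n\<close> by simp
  qed
  moreover have "n \<noteq> 0" using less.prems by (metis even_zero)
  ultimately show ?case by (subst euler_num.simps) simp
qed

lemma en_rec: assumes "n \<ge> 1" shows "(\<Sum>k\<in>{k. k \<le> n \<and> even (n - k)}. of_nat (n choose k) * euler_num k) = 0"
proof -
  have "{k. k \<le> n \<and> even (n - k)} = insert n {k. k < n \<and> even (n - k)}" by auto
  moreover have "euler_num n = - (\<Sum>k\<in>{k. k < n \<and> even (n - k)}. of_nat (n choose k) * euler_num k)"
    using assms by (subst euler_num.simps) simp
  ultimately show ?thesis by simp
qed

lemma appell_sum_deriv: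
  fixes c :: "nat \<Rightarrow> complex"
  shows "((\<lambda>x. \<Sum>k\<le>n. of_nat (n choose k) * c k * (x - a)^(n-k)) has_field_derivative
     (of_nat n * (\<Sum>k\<le>n-1. of_nat ((n-1) choose k) * c k * (z - a)^(n-1-k)))) (at z)"
proof -
  have d: "((\<lambda>x. \<Sum>k\<le>n. of_nat (n choose k) * c k * (x - a)^(n-k)) has_field_derivative
     (\<Sum>k\<le>n. of_nat (n choose k) * c k * (of_nat (n-k) * (z - a)^(n-k-1)))) (at z)"
    by (rule DERIV_sum) (auto intro!: derivative_eq_intros)
  have "(\<Sum>k\<le>n. of_nat (n choose k) * c k * (of_nat (n-k) * (z - a)^(n-k-1))) =
        of_nat n * (\<Sum>k\<le>n-1. of_nat ((n-1) choose k) * c k * (z - a)^(n-1-k))"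
  proof (cases n)
    case 0 then show ?thesis by simp
  next
    case (Suc m)
    have "(\<Sum>k\<le>n. of_nat (n choose k) * c k * (of_nat (n-k) * (z - a)^(n-k-1))) =
          (\<Sum>k\<le>m. of_nat (n choose k) * c k * (of_nat (n-k) * (z - a)^(n-k-1)))"
      using Suc by (simp add: sum.atMost_Suc)
    also have "\<dots> = (\<Sum>k\<le>m. of_nat n * (of_nat (m choose k) * c k * (z - a)^(m-k)))"
    proof (rule sum.cong[OF refl])
      fix k assume "k \<in> {..m}"
      hence k: "k \<le> m" by simp
      have "of_nat (n choose k) * (of_nat (n-k) :: complex) = of_nat ((n - k) * (n choose k))" by simp
      also have "\<dots> = of_nat (n * (m choose k))" using binomial_absorb_comp[of n k] Suc by simp
      finally have *: "of_nat (n choose k) * (of_nat (n-k) :: complex) = of_nat n * of_nat (m choose k)" by simp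
      have "n - k - 1 = m - k" using Suc by simp
      thus "of_nat (n choose k) * c k * (of_nat (n-k) * (z - a)^(n-k-1)) = of_nat n * (of_nat (m choose k) * c k * (z - a)^(m-k))"
        using * by (simp add: algebra_simps)
    qed
    finally show ?thesis using Suc by (simp add: sum_distrib_left)
  qed
  with d show ?thesis by simp
qed

definition appell :: "(nat \<Rightarrow> complex \<Rightarrow> complex) \<Rightarrow> bool" where
  "appell P \<longleftrightarrow> (\<forall>n z. (P n has_field_derivative (of_nat n * P (n-1) z)) (at z))"

lemma B_fun: "B n = (\<lambda>x. \<Sum>k\<le>n. of_nat (n choose k) * bn k * (x - 0)^(n-k))"
  by (rule ext) (simp add: bernoulli_poly_def)
lemma E_fun: "E n = (\<lambda>x. \<Sum>k\<le>n. of_nat (n choose k) * (of_int (euler_num k) / 2 ^ k) * (x - 1/2)^(n-k))"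
  by (rule ext) (simp add: euler_poly_def)

lemma appell_B: "appell B"
  unfolding appell_def
proof (intro allI)
  fix n z
  show "(B n has_field_derivative (of_nat n * B (n-1) z)) (at z)"
    using appell_sum_deriv[of n "\<lambda>k. bn k" 0 z] by (simp add: B_fun)
qed

lemma appell_E: "appell E"
  unfolding appell_def
proof (intro allI)
  fix n z
  show "(E n has_field_derivative (of_nat n * E (n-1) z)) (at z)"
    using appell_sum_deriv[of n "\<lambda>k. of_int (euler_num k) / 2 ^ k" "1/2" z] by (simp add: E_fun)
qed

lemma deriv_const:
  fixes f :: "complex \<Rightarrow> complex"
  assumes "\<And>z. (f has_field_derivative 0) (at z)"
  shows "f x = f y"
proof -
  obtain c where "\<forall>z\<in>UNIV. f z = c"
    using has_field_derivative_zero_constant[of UNIV f] assms by auto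
  thus ?thesis by simp
qed

lemma bn1': "bernoulli_num (Suc 0) = -1/2" using bn1 by simp
lemma en1': "euler_num (Suc 0) = 0" using en1 by simp

lemma sum_zero_pow: "(\<Sum>k\<le>n. (f k :: complex) * 0^(n-k)) = f n"
proof (cases n)
  case (Suc m)
  have "(\<Sum>k\<le>m. f k * 0^(Suc m-k)) = 0" by (rule sum.neutral) auto
  thus ?thesis using Suc by (simp add: sum.atMost_Suc)
qed simp

lemma B0: "B 0 z = 1" by (simp add: bernoulli_poly_def bn0)
lemma E0: "E 0 z = 1" by (simp add: euler_poly_def en0)
lemma B1: "B 1 z = z - 1/2" by (simp add: bernoulli_poly_def bn0 bn1' of_rat_minus of_rat_divide)
lemma E1: "E 1 z = z - 1/2" by (simp add: euler_poly_def en0 en1')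
lemma B_at0: "B n 0 = bn n" using sum_zero_pow[of "\<lambda>k. of_nat (n choose k) * bn k" n] by (simp add: bernoulli_poly_def)

lemma B_at1: "B n 1 = bn n + (if n = 1 then 1 else 0)"
proof -
  consider "n = 0" | "n = 1" | "n \<ge> 2" by linarith
  then show ?thesis
  proof cases
    case 3
    then obtain m where m: "n = Suc m" "m \<ge> 1" by (cases n) auto
    have "B n 1 = (\<Sum>k\<le>n. of_rat (of_nat (n choose k) * bernoulli_num k))"
      by (simp add: bernoulli_poly_def of_rat_mult)
    also have "\<dots> = of_rat (\<Sum>k\<le>n. of_nat (n choose k) * bernoulli_num k)"
      by (simp add: of_rat_sum)
    also have "(\<Sum>k\<le>n. of_nat (n choose k) * bernoulli_num k) = bernoulli_num n"
      using bn_rec[OF m(2)] m(1) by (simp add: sum.atMost_Suc del: of_nat_Suc)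
    finally show ?thesis using 3 by simp
  qed (auto simp: bernoulli_poly_def bn0 bn1')
qed

lemma B_chain[derivative_intros]: "(f has_field_derivative f') (at x) \<Longrightarrow>
  ((\<lambda>x. B n (f x)) has_field_derivative (of_nat n * B (n-1) (f x) * f')) (at x)"
  using DERIV_chain'[of f f' x UNIV "B n"] appell_B unfolding appell_def by blast
lemma E_chain[derivative_intros]: "(f has_field_derivative f') (at x) \<Longrightarrow>
  ((\<lambda>x. E n (f x)) has_field_derivative (of_nat n * E (n-1) (f x) * f')) (at x)"
  using DERIV_chain'[of f f' x UNIV "E n"] appell_E unfolding appell_def by blast

lemma pow_helper[simp]: "of_nat m * w ^ (m - Suc 0) * w = of_nat m * (w::complex) ^ m"
  by (cases m) auto
lemma pow_helper2[simp]: "w * (of_nat m * w ^ (m - Suc 0)) = of_nat m * (w::complex) ^ m"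
  by (cases m) auto

lemma E_10: "E m 1 + E m 0 = (if m = 0 then 2 else 0)"
proof -
  define f where "f k = of_nat (m choose k) * (of_int (euler_num k) :: complex)" for k
  have "E m 1 + E m 0 = (\<Sum>k\<le>m. f k / 2^k * ((1/2)^(m-k) + (-1/2)^(m-k)))"
    by (simp add: euler_poly_def f_def sum.distrib[symmetric] algebra_simps)
  also have "\<dots> = (\<Sum>k\<le>m. (if even (m-k) then 2 * f k else 0)) / 2^m"
    unfolding sum_divide_distrib
  proof (rule sum.cong[OF refl])
    fix k assume "k \<in> {..m}"
    hence k: "k \<le> m" by simp
    have p: "(2::complex)^m = 2^k * 2^(m-k)" using k by (simp add: power_add[symmetric])
    have "(-1/2::complex)^(m-k) = (-1)^(m-k) / 2^(m-k)" by (simp add: power_minus' power_one_over)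
    thus "f k / 2^k * ((1/2)^(m-k) + (-1/2)^(m-k)) = (if even (m-k) then 2 * f k else 0) / 2^m"
      by (auto simp: p power_divide field_simps)
  qed
  also have "(\<Sum>k\<le>m. (if even (m-k) then 2 * f k else 0)) = 2 * (\<Sum>k\<in>{k. k \<le> m \<and> even (m - k)}. f k)"
  proof -
    have s1: "(\<Sum>k\<in>{k\<in>{..m}. even (m-k)}. 2 * f k) = (\<Sum>k\<le>m. (if even (m-k) then 2 * f k else 0))"
      by (rule sum.inter_filter) simp
    have s2: "{k\<in>{..m}. even (m-k)} = {k. k \<le> m \<and> even (m - k)}" by auto
    show ?thesis by (metis s1 s2 sum_distrib_left)
  qed
  finally have *: "E m 1 + E m 0 = 2 * (\<Sum>k\<in>{k. k \<le> m \<and> even (m - k)}. f k) / 2^m" .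
  show ?thesis
  proof (cases "m = 0")
    case True then show ?thesis by (simp add: E0)
  next
    case False
    have "(\<Sum>k\<in>{k. k \<le> m \<and> even (m - k)}. f k) = of_int (\<Sum>k\<in>{k. k \<le> m \<and> even (m - k)}. of_nat (m choose k) * euler_num k)"
      by (simp add: f_def)
    also have "\<dots> = 0" using en_rec[of m] False by simp
    finally show ?thesis using * False by simp
  qed
qed

lemma E_shift: "E m (z+1) + E m z = 2 * z^m"
proof (induction m arbitrary: z)
  case 0 then show ?case by (simp add: E0)
next
  case (Suc m)
  define D where "D z = E (Suc m) (z+1) + E (Suc m) z - 2 * z^(Suc m)" for z
  have "(D has_field_derivative 0) (at w)" for w
  proof -
    have "(D has_field_derivative (of_nat (Suc m) * E m (w+1) * 1 + of_nat (Suc m) * E m w * 1 - 2 * (of_nat (Suc m) * w^m))) (at w)"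
      unfolding D_def by (intro derivative_eq_intros) (auto simp: algebra_simps)
    moreover have "of_nat (Suc m) * E m (w+1) * 1 + of_nat (Suc m) * E m w * 1 - 2 * (of_nat (Suc m) * w^m) = 
       of_nat (Suc m) * (E m (w+1) + E m w) - 2 * (of_nat (Suc m) * w^m)" by (simp add: algebra_simps)
    moreover have "\<dots> = 0" using Suc.IH[of w] by simp
    ultimately show ?thesis by metis
  qed
  hence "D z = D 0" by (rule deriv_const)
  also have "D 0 = 0" using E_10[of "Suc m"] by (simp add: D_def)
  finally show ?case by (simp add: D_def)
qed

lemma E_half: "E m (1/2) = of_int (euler_num m) / 2^m"
  using sum_zero_pow[of "\<lambda>k. of_nat (m choose k) * (of_int (euler_num k) / 2 ^ k)" m]
  by (simp add: euler_poly_def)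

lemma E_refl: "E m (1 - z) = (-1)^m * E m z"
proof (induction m arbitrary: z)
  case 0 then show ?case by (simp add: E0)
next
  case (Suc m)
  define D where "D z = E (Suc m) (1 - z) - (-1)^(Suc m) * E (Suc m) z" for z
  have "(D has_field_derivative 0) (at w)" for w
  proof -
    have "(D has_field_derivative (of_nat (Suc m) * E m (1-w) * (0 - 1) - (-1)^(Suc m) * (of_nat (Suc m) * E m w * 1))) (at w)"
      unfolding D_def by (auto intro!: derivative_eq_intros)
    moreover have "of_nat (Suc m) * E m (1-w) * (0 - 1) - (-1)^(Suc m) * (of_nat (Suc m) * E m w * 1) = 0"
      using Suc.IH[of w] by simp
    ultimately show ?thesis by metis
  qed
  hence "D z = D (1/2)" by (rule deriv_const)
  also have "D (1/2) = 0"
  proof (cases "even (Suc m)")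
    case True then show ?thesis by (simp add: D_def)
  next
    case False
    then show ?thesis by (simp add: D_def E_half en_odd)
  qed
  finally show ?case by (simp add: D_def eq_neg_iff_add_eq_0)
qed

lemma nz2[simp]: "of_nat m + (2::complex) \<noteq> 0"
proof -
  have "of_nat (Suc (Suc m)) \<noteq> (0::complex)" by (rule of_nat_neq_0)
  thus ?thesis by (simp add: add.commute)
qed

lemma B_shift: "B m (z+1) - B m z = of_nat m * z^(m-1)"
proof (induction m arbitrary: z)
  case 0 then show ?case by (simp add: B0)
next
  case (Suc m)
  define D where "D z = B (Suc m) (z+1) - B (Suc m) z - of_nat (Suc m) * z^m" for z
  have "(D has_field_derivative 0) (at w)" for w
  proof -
    have "(D has_field_derivative (of_nat (Suc m) * (B m (w+1) - B m w - of_nat m * w^(m-1)))) (at w)"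
      unfolding D_def by (auto intro!: derivative_eq_intros simp: algebra_simps)
    thus ?thesis using Suc.IH[of w] by simp
  qed
  hence "D z = D 0" by (rule deriv_const)
  also have "D 0 = 0" by (simp add: D_def B_at1 B_at0)
  finally show ?case by (simp add: D_def)
qed

lemma B_refl: "B m (1 - z) = (-1)^m * B m z"
proof (induction m arbitrary: z)
  case 0 then show ?case by (simp add: B0)
next
  case (Suc m)
  define D where "D z = B (Suc m) (1 - z) - (-1)^(Suc m) * B (Suc m) z" for z
  have "(D has_field_derivative 0) (at w)" for w
  proof -
    have "(D has_field_derivative (- of_nat (Suc m) * (B m (1-w) - (-1)^m * B m w))) (at w)"
      unfolding D_def by (auto intro!: derivative_eq_intros simp: algebra_simps)
    thus ?thesis using Suc.IH[of w] by simp
  qed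
  hence Dc: "D w = D 0" for w by (rule deriv_const)
  define c where "c = D 0"
  define A where "A z = (- B (Suc (Suc m)) (1-z) - (-1)^(Suc m) * B (Suc (Suc m)) z) - of_nat (Suc (Suc m)) * c * z" for z
  have "(A has_field_derivative 0) (at w)" for w
  proof -
    have "(A has_field_derivative (of_nat (Suc (Suc m)) * (D w - c))) (at w)"
      unfolding A_def D_def by (auto intro!: derivative_eq_intros simp: algebra_simps)
    thus ?thesis using Dc[of w] by (simp add: c_def)
  qed
  hence "A 1 = A 0" by (rule deriv_const)
  moreover have "B (Suc (Suc m)) 1 = B (Suc (Suc m)) 0" by (simp add: B_at1 B_at0)
  ultimately have "of_nat (Suc (Suc m)) * c = 0" by (simp add: A_def algebra_simps)
  hence "c = 0" by (metis mult_eq_0_iff of_nat_neq_0)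
  hence "D z = 0" using Dc c_def by simp
  thus ?case by (simp add: D_def eq_neg_iff_add_eq_0)
qed

lemma bn_odd: assumes "odd m" "m \<noteq> 1" shows "bernoulli_num m = 0"
proof -
  have "B m (1 - 0) = (-1)^m * B m 0" by (rule B_refl)
  hence "bn m = - bn m" using assms by (simp add: B_at1 B_at0)
  hence "bn m = 0" by simp
  thus ?thesis by simp
qed

lemma E_even0: assumes "even m" "m \<noteq> 0" shows "E m 0 = 0"
proof -
  have "E m (1 - 0) = (-1)^m * E m 0" by (rule E_refl)
  hence "E m 1 = E m 0" using assms by simp
  thus ?thesis using E_10[of m] assms by simp
qed

lemma B_mult: "2^m * (B m u + B m (u + 1/2)) = 2 * B m (2*u)"
proof (induction m arbitrary: u)
  case 0 then show ?case by (simp add: B0)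
next
  case (Suc m)
  define D where "D u = 2^(Suc m) * (B (Suc m) u + B (Suc m) (u + 1/2)) - 2 * B (Suc m) (2*u)" for u
  have "(D has_field_derivative 0) (at w)" for w
  proof -
    have "(D has_field_derivative (2 * of_nat (Suc m) * (2^m * (B m w + B m (w + 1/2)) - 2 * B m (2*w)))) (at w)"
      unfolding D_def by (auto intro!: derivative_eq_intros simp: algebra_simps)
    thus ?thesis using Suc.IH[of w] by simp
  qed
  hence Dc: "D w = D 0" for w by (rule deriv_const)
  define c where "c = D 0"
  define A where "A u = (2^(Suc m) * (B (Suc (Suc m)) u + B (Suc (Suc m)) (u + 1/2)) - B (Suc (Suc m)) (2*u)) - of_nat (Suc (Suc m)) * c * u" for u
  have "(A has_field_derivative 0) (at w)" for w
  proof -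
    have "(A has_field_derivative (of_nat (Suc (Suc m)) * (D w - c))) (at w)"
      unfolding A_def D_def by (auto intro!: derivative_eq_intros simp: algebra_simps)
    thus ?thesis using Dc[of w] by (simp add: c_def)
  qed
  hence "A 1 = A 0" by (rule deriv_const)
  moreover have "B (Suc (Suc m)) 1 = B (Suc (Suc m)) 0" by (simp add: B_at1 B_at0)
  moreover have "A 1 - A 0 = 2^(Suc m) * ((B (Suc (Suc m)) 1 - B (Suc (Suc m)) 0) + (B (Suc (Suc m)) (1/2 + 1) - B (Suc (Suc m)) (1/2)))
      - ((B (Suc (Suc m)) (1 + 1) - B (Suc (Suc m)) 1) + (B (Suc (Suc m)) 1 - B (Suc (Suc m)) 0)) - of_nat (Suc (Suc m)) * c"
    unfolding A_def by (simp add: algebra_simps)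
  moreover have "B (Suc (Suc m)) 1 - B (Suc (Suc m)) 0 = 0" by (simp add: B_at1 B_at0)
  moreover have "B (Suc (Suc m)) (1/2 + 1) - B (Suc (Suc m)) (1/2) = of_nat (Suc (Suc m)) * (1/2)^(Suc m)"
    using B_shift[of "Suc (Suc m)" "1/2"] by simp
  moreover have "B (Suc (Suc m)) (1 + 1) - B (Suc (Suc m)) 1 = of_nat (Suc (Suc m))"
    using B_shift[of "Suc (Suc m)" 1] by simp
  moreover have "(2::complex)^(Suc m) * (1/2)^(Suc m) = 1" by (simp add: power_mult_distrib[symmetric])
  ultimately have "of_nat (Suc (Suc m)) * c = 0" 
    by (metis (no_types, lifting) add_0 cancel_comm_monoid_add_class.diff_cancel diff_add_cancel diff_zero mult.assoc mult.commute mult.left_neutral)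
  hence "c = 0" by (metis mult_eq_0_iff of_nat_neq_0)
  hence "D u = 0" using Dc c_def by simp
  thus ?case by (simp add: D_def)
qed

lemma E_B: "of_nat (Suc m) * E m z = 2 * (B (Suc m) z - 2^(Suc m) * B (Suc m) (z/2))"
proof (induction m arbitrary: z)
  case 0
  have b: "B (Suc 0) w = w - 1/2" for w using B1[of w] by simp
  show ?case by (simp only: b) (simp add: E0 algebra_simps)
next
  case (Suc m)
  define D where "D z = of_nat (Suc (Suc m)) * E (Suc m) z - 2 * (B (Suc (Suc m)) z - 2^(Suc (Suc m)) * B (Suc (Suc m)) (z/2))" for z
  have "(D has_field_derivative 0) (at w)" for w
  proof -
    have "(D has_field_derivative (of_nat (Suc (Suc m)) * (of_nat (Suc m) * E m w - 2 * (B (Suc m) w - 2^(Suc m) * B (Suc m) (w/2))))) (at w)"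
      unfolding D_def by (auto intro!: derivative_eq_intros simp: algebra_simps)
    thus ?thesis using Suc.IH[of w] by simp
  qed
  hence Dc: "D w = D 0" for w by (rule deriv_const)
  have m1: "2^(Suc (Suc m)) * (B (Suc (Suc m)) 0 + B (Suc (Suc m)) (0 + 1/2)) = 2 * B (Suc (Suc m)) (2*0)"
    by (rule B_mult)
  have "D 1 + D 0 = of_nat (Suc (Suc m)) * (E (Suc m) 1 + E (Suc m) 0) - 2 * ((B (Suc (Suc m)) 1 - B (Suc (Suc m)) 0)
     + 2 * B (Suc (Suc m)) 0 - 2^(Suc (Suc m)) * (B (Suc (Suc m)) 0 + B (Suc (Suc m)) (0 + 1/2)))"
    unfolding D_def by (simp add: algebra_simps)
  also have "\<dots> = 0" using m1 E_10[of "Suc m"] by (simp add: B_at1 B_at0)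
  finally have "D 0 = 0" using Dc[of 1] by simp
  thus ?case using Dc[of z] by (simp add: D_def)
qed

lemma E_at0: "of_nat (Suc m) * E m 0 = - 2 * (2^(Suc m) - 1) * bn (Suc m)"
  using E_B[of m 0] by (simp add: B_at0 algebra_simps)



definition FF :: "nat \<Rightarrow> complex \<Rightarrow> complex \<Rightarrow> (nat \<Rightarrow> complex \<Rightarrow> complex) \<Rightarrow> (nat \<Rightarrow> complex \<Rightarrow> complex) \<Rightarrow> complex \<Rightarrow> complex \<Rightarrow> complex" where
  "FF N s t P Q x y = (\<Sum>k\<le>N. (-1)^k * (s gchoose k) * (t gchoose (N-k)) * P (N-k) x * Q k y)"

lemma absorb_helper: "X * ((t::complex) gchoose Suc j) * (of_nat (Suc j) * Y) = t * (X * ((t-1) gchoose j) * Y)"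
proof -
  have "X * (t gchoose Suc j) * (of_nat (Suc j) * Y) = X * (of_nat (Suc j) * (t gchoose Suc j)) * Y" by (simp only: mult_ac)
  also have "\<dots> = X * (t * ((t-1) gchoose j)) * Y" by (simp only: gbinomial_absorption)
  also have "\<dots> = t * (X * ((t-1) gchoose j) * Y)" by (simp only: mult_ac)
  finally show ?thesis .
qed

lemma FF_S1: "(\<Sum>k\<le>Suc M. (-1)^k * (s gchoose k) * (t gchoose (Suc M-k)) * (of_nat (Suc M - k) * P (Suc M - k - 1) u * Q k v))
   = t * FF M s (t-1) P Q u v"
proof -
  have "(\<Sum>k\<le>Suc M. (-1)^k * (s gchoose k) * (t gchoose (Suc M-k)) * (of_nat (Suc M - k) * P (Suc M - k - 1) u * Q k v))
     = (\<Sum>k\<le>M. (-1)^k * (s gchoose k) * (t gchoose (Suc M-k)) * (of_nat (Suc M - k) * P (Suc M - k - 1) u * Q k v))"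
    by (simp add: sum.atMost_Suc)
  also have "\<dots> = (\<Sum>k\<le>M. t * ((-1)^k * (s gchoose k) * ((t-1) gchoose (M-k)) * P (M-k) u * Q k v))"
  proof (rule sum.cong[OF refl])
    fix k assume "k \<in> {..M}"
    hence k: "Suc M - k = Suc (M - k)" by auto
    show "(-1)^k * (s gchoose k) * (t gchoose (Suc M-k)) * (of_nat (Suc M - k) * P (Suc M - k - 1) u * Q k v) =
      t * ((-1)^k * (s gchoose k) * ((t-1) gchoose (M-k)) * P (M-k) u * Q k v)"
      unfolding k using absorb_helper[of "(-1)^k * (s gchoose k)" t "M-k" "P (M-k) u * Q k v"]
      by (simp only: diff_Suc_1 mult.assoc)
  qed
  finally show ?thesis by (simp add: FF_def sum_distrib_left)
qed

lemma FF_S2: "(\<Sum>k\<le>Suc M. (-1)^k * (s gchoose k) * (t gchoose (Suc M-k)) * (P (Suc M-k) u * (of_nat k * Q (k-1) v)))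
   = - s * FF M (s-1) t P Q u v"
proof -
  have "(\<Sum>k\<le>Suc M. (-1)^k * (s gchoose k) * (t gchoose (Suc M-k)) * (P (Suc M-k) u * (of_nat k * Q (k-1) v)))
     = (\<Sum>k\<le>M. (-1)^(Suc k) * (s gchoose (Suc k)) * (t gchoose (Suc M-Suc k)) * (P (Suc M-Suc k) u * (of_nat (Suc k) * Q k v)))"
    by (subst sum.atMost_Suc_shift) simp
  also have "\<dots> = (\<Sum>k\<le>M. - s * ((-1)^k * ((s-1) gchoose k) * (t gchoose (M-k)) * P (M-k) u * Q k v))"
  proof (rule sum.cong[OF refl])
    fix k assume "k \<in> {..M}"
    have "(-1)^(Suc k) * (s gchoose (Suc k)) * (t gchoose (Suc M-Suc k)) * (P (Suc M-Suc k) u * (of_nat (Suc k) * Q k v)) =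
      - ((-1)^k) * (s gchoose (Suc k)) * (of_nat (Suc k) * ((t gchoose (M-k)) * P (M-k) u * Q k v))"
      by (simp only: power_Suc diff_Suc_Suc mult_ac mult_minus_left mult_1_left)
    also have "\<dots> = - s * ((-1)^k * ((s-1) gchoose k) * (t gchoose (M-k)) * P (M-k) u * Q k v)"
      using absorb_helper[of "- ((-1)^k)" s k "(t gchoose (M-k)) * P (M-k) u * Q k v"]
      by (simp add: mult_ac)
    finally show "(-1)^(Suc k) * (s gchoose (Suc k)) * (t gchoose (Suc M-Suc k)) * (P (Suc M-Suc k) u * (of_nat (Suc k) * Q k v)) =
      - s * ((-1)^k * ((s-1) gchoose k) * (t gchoose (M-k)) * P (M-k) u * Q k v)" .
  qed
  finally show ?thesis by (simp add: FF_def sum_distrib_left)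
qed

lemma appell_chain: "appell P \<Longrightarrow> (a has_field_derivative a') (at x) \<Longrightarrow>
  ((\<lambda>x. P n (a x)) has_field_derivative (of_nat n * P (n-1) (a x) * a')) (at x)"
  using DERIV_chain'[of a a' x UNIV "P n"] unfolding appell_def by blast

lemma FF_deriv:
  assumes P: "appell P" and Q: "appell Q"
    and a: "(a has_field_derivative a') (at x)" and b: "(b has_field_derivative b') (at x)"
  shows "((\<lambda>x. FF (Suc M) s t P Q (a x) (b x)) has_field_derivative
     (a' * t * FF M s (t-1) P Q (a x) (b x) - b' * s * FF M (s-1) t P Q (a x) (b x))) (at x)"
proof -
  let ?N = "Suc M"
  have d: "((\<lambda>x. FF ?N s t P Q (a x) (b x)) has_field_derivative
    (\<Sum>k\<le>?N. (-1)^k * (s gchoose k) * (t gchoose (?N-k)) *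
      ((of_nat (?N - k) * P (?N - k - 1) (a x) * a') * Q k (b x) + P (?N-k) (a x) * (of_nat k * Q (k-1) (b x) * b')))) (at x)"
    unfolding FF_def
  proof (rule DERIV_sum)
    fix k
    have dP: "((\<lambda>x. P (?N-k) (a x)) has_field_derivative (of_nat (?N - k) * P (?N - k - 1) (a x) * a')) (at x)"
      by (rule appell_chain[OF P a])
    have dQ: "((\<lambda>x. Q k (b x)) has_field_derivative (of_nat k * Q (k-1) (b x) * b')) (at x)"
      by (rule appell_chain[OF Q b])
    have "((\<lambda>x. P (?N-k) (a x) * Q k (b x)) has_field_derivative
       ((of_nat (?N - k) * P (?N - k - 1) (a x) * a') * Q k (b x) + P (?N-k) (a x) * (of_nat k * Q (k-1) (b x) * b'))) (at x)"
      using DERIV_mult[OF dP dQ] by (simp add: algebra_simps)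
    from DERIV_cmult[OF this, of "(-1)^k * (s gchoose k) * (t gchoose (?N-k))"]
    show "((\<lambda>x. (-1)^k * (s gchoose k) * (t gchoose (?N-k)) * P (?N-k) (a x) * Q k (b x)) has_field_derivative
      (-1)^k * (s gchoose k) * (t gchoose (?N-k)) *
      ((of_nat (?N - k) * P (?N - k - 1) (a x) * a') * Q k (b x) + P (?N-k) (a x) * (of_nat k * Q (k-1) (b x) * b'))) (at x)"
      by (simp add: mult.assoc)
  qed
  have "(\<Sum>k\<le>?N. (-1)^k * (s gchoose k) * (t gchoose (?N-k)) *
      ((of_nat (?N - k) * P (?N - k - 1) (a x) * a') * Q k (b x) + P (?N-k) (a x) * (of_nat k * Q (k-1) (b x) * b')))
    = a' * (\<Sum>k\<le>?N. (-1)^k * (s gchoose k) * (t gchoose (?N-k)) * (of_nat (?N - k) * P (?N - k - 1) (a x) * Q k (b x)))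
    + b' * (\<Sum>k\<le>?N. (-1)^k * (s gchoose k) * (t gchoose (?N-k)) * (P (?N-k) (a x) * (of_nat k * Q (k-1) (b x))))"
    by (simp add: sum_distrib_left sum.distrib[symmetric] algebra_simps)
  also have "\<dots> = a' * t * FF M s (t-1) P Q (a x) (b x) - b' * s * FF M (s-1) t P Q (a x) (b x)"
    by (simp only: FF_S1 FF_S2) (simp add: algebra_simps)
  finally show ?thesis using d by simp
qed

lemma FF_comb: "s * FF M r (s-1) P Q u v + r * FF M (r-1) s P Q u v = (r + s - of_nat M) * FF M r s P Q u v"
proof -
  have "s * FF M r (s-1) P Q u v + r * FF M (r-1) s P Q u v =
    (\<Sum>k\<le>M. (-1)^k * P (M-k) u * Q k v * (r gchoose k) * (s * ((s-1) gchoose (M-k))) + (-1)^k * P (M-k) u * Q k v * (s gchoose (M-k)) * (r * ((r-1) gchoose k)))"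
    by (simp add: FF_def sum_distrib_left sum.distrib algebra_simps)
  also have "\<dots> = (\<Sum>k\<le>M. (r + s - of_nat M) * ((-1)^k * (r gchoose k) * (s gchoose (M-k)) * P (M-k) u * Q k v))"
  proof (rule sum.cong[OF refl])
    fix k assume "k \<in> {..M}"
    hence k: "k \<le> M" by simp
    have 1: "s * ((s-1) gchoose (M-k)) = (s - of_nat (M-k)) * (s gchoose (M-k))" by (rule gbinomial_absorb_comp[symmetric])
    have 2: "r * ((r-1) gchoose k) = (r - of_nat k) * (r gchoose k)" by (rule gbinomial_absorb_comp[symmetric])
    have 3: "of_nat (M-k) = (of_nat M - of_nat k :: complex)" using k by (simp add: of_nat_diff)
    show "(-1)^k * P (M-k) u * Q k v * (r gchoose k) * (s * ((s-1) gchoose (M-k))) + (-1)^k * P (M-k) u * Q k v * (s gchoose (M-k)) * (r * ((r-1) gchoose k)) =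
      (r + s - of_nat M) * ((-1)^k * (r gchoose k) * (s gchoose (M-k)) * P (M-k) u * Q k v)"
      unfolding 1 2 3 by (simp add: algebra_simps)
  qed
  finally show ?thesis by (simp add: FF_def sum_distrib_left)
qed

lemma FF0: "FF 0 s t P Q x y = P 0 x * Q 0 y" by (simp add: FF_def)

definition GB :: "nat \<Rightarrow> complex \<Rightarrow> complex \<Rightarrow> complex \<Rightarrow> complex \<Rightarrow> complex \<Rightarrow> complex" where
  "GB N r s t x y = r * FF N s t B B x y + s * FF N t r B B y (1-x-y) + t * FF N r s B B (1-x-y) x"

lemma GB_cyc: "GB N r s t 0 y = GB N t r s (1-y) 0"
  by (simp add: GB_def algebra_simps)

lemma GB_dx:
  assumes "r + s + t = of_nat (Suc M)"
  shows "((\<lambda>x. GB (Suc M) r s t x y) has_field_derivative (t * GB M r s (t-1) x y)) (at x)"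
proof -
  have d1: "((\<lambda>x. FF (Suc M) s t B B x y) has_field_derivative (1 * t * FF M s (t-1) B B x y - 0 * s * FF M (s-1) t B B x y)) (at x)"
    by (rule FF_deriv[OF appell_B appell_B]) (auto intro!: derivative_eq_intros)
  have d2: "((\<lambda>x. FF (Suc M) t r B B y (1-x-y)) has_field_derivative (0 * r * FF M t (r-1) B B y (1-x-y) - (-1) * t * FF M (t-1) r B B y (1-x-y))) (at x)"
    by (rule FF_deriv[OF appell_B appell_B]) (auto intro!: derivative_eq_intros)
  have d3: "((\<lambda>x. FF (Suc M) r s B B (1-x-y) x) has_field_derivative ((-1) * s * FF M r (s-1) B B (1-x-y) x - 1 * r * FF M (r-1) s B B (1-x-y) x)) (at x)"
    by (rule FF_deriv[OF appell_B appell_B]) (auto intro!: derivative_eq_intros)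
  have c: "s * FF M r (s-1) B B (1-x-y) x + r * FF M (r-1) s B B (1-x-y) x = (r + s - of_nat M) * FF M r s B B (1-x-y) x"
    by (rule FF_comb)
  have rs: "r + s - of_nat M = 1 - t" using assms by (simp add: algebra_simps)
  have "((\<lambda>x. GB (Suc M) r s t x y) has_field_derivative
     (r * (1 * t * FF M s (t-1) B B x y - 0 * s * FF M (s-1) t B B x y) + s * (0 * r * FF M t (r-1) B B y (1-x-y) - (-1) * t * FF M (t-1) r B B y (1-x-y))
      + t * ((-1) * s * FF M r (s-1) B B (1-x-y) x - 1 * r * FF M (r-1) s B B (1-x-y) x))) (at x)"
    unfolding GB_def by (intro DERIV_add DERIV_cmult d1 d2 d3)
  moreover have "r * (1 * t * FF M s (t-1) B B x y - 0 * s * FF M (s-1) t B B x y) + s * (0 * r * FF M t (r-1) B B y (1-x-y) - (-1) * t * FF M (t-1) r B B y (1-x-y))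
      + t * ((-1) * s * FF M r (s-1) B B (1-x-y) x - 1 * r * FF M (r-1) s B B (1-x-y) x) = t * GB M r s (t-1) x y"
  proof -
    have "t * ((-1) * s * FF M r (s-1) B B (1-x-y) x - 1 * r * FF M (r-1) s B B (1-x-y) x) = - t * (s * FF M r (s-1) B B (1-x-y) x + r * FF M (r-1) s B B (1-x-y) x)"
      by (simp add: algebra_simps)
    also have "\<dots> = t * ((t-1) * FF M r s B B (1-x-y) x)" unfolding c rs by (simp add: algebra_simps)
    finally show ?thesis by (simp add: GB_def algebra_simps)
  qed
  ultimately show ?thesis by simp
qed

lemma GB_const_x:
  assumes IH: "\<And>r s t x y. r + s + t = of_nat M \<Longrightarrow> GB M r s t x y = 0"
    and "r + s + t = of_nat (Suc M)"
  shows "GB (Suc M) r s t x y = GB (Suc M) r s t 0 y"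
proof -
  have "((\<lambda>x. GB (Suc M) r s t x y) has_field_derivative 0) (at w)" for w
    using GB_dx[OF assms(2), of y w] IH[of r s "t-1" w y] assms(2) by (simp add: algebra_simps)
  thus ?thesis by (rule deriv_const)
qed

lemma B1': "B (Suc 0) z = z - 1/2" using B1[of z] by simp
lemma bn1c: "bn (Suc 0) = - 1/2" by (simp add: bn1' of_rat_minus of_rat_divide)

lemma ftc01:
  fixes F f :: "complex \<Rightarrow> complex"
  assumes "\<And>z. (F has_field_derivative f z) (at z)"
  shows "((\<lambda>u::real. f (of_real u)) has_integral (F 1 - F 0)) {0..1}"
proof -
  have "((\<lambda>u. F (of_real u)) has_vector_derivative f (of_real u)) (at u within {0..1})" for u :: real
    by (rule has_vector_derivative_real_field[OF assms])
  from fundamental_theorem_of_calculus[of 0 1 "\<lambda>u. F (of_real u)" "\<lambda>u. f (of_real u)", OF _ this]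
  show ?thesis by simp
qed

lemma IB1: "((\<lambda>u::real. B m (of_real u)) has_integral (if m = 0 then 1 else 0)) {0..1}"
proof -
  have "((\<lambda>z. B (Suc m) z / of_nat (Suc m)) has_field_derivative B m z) (at z)" for z
    using DERIV_cdivide[OF appell_B[unfolded appell_def, rule_format, of "Suc m" z], of "of_nat (Suc m)"]
    by (simp del: of_nat_Suc)
  from ftc01[OF this] have "((\<lambda>u::real. B m (of_real u)) has_integral ((B (Suc m) 1 - B (Suc m) 0) / of_nat (Suc m))) {0..1}"
    by (simp add: diff_divide_distrib)
  moreover have "B (Suc m) (0+1) - B (Suc m) 0 = of_nat (Suc m) * 0^m" using B_shift[of "Suc m" 0] by simp
  ultimately show ?thesis by (cases m) (simp_all del: of_nat_Suc)
qed

lemma IB2: "a \<ge> 1 \<Longrightarrow> b \<ge> 1 \<Longrightarrow> ((\<lambda>u::real. B a (of_real u) * B b (of_real u)) has_integral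
   ((-1)^(b-1) * fact a * fact b / fact (a+b) * bn (a+b))) {0..1}"
proof (induction b arbitrary: a)
  case 0 then show ?case by simp
next
  case (Suc b)
  have d: "((\<lambda>z. B (Suc a) z * B (Suc b) z) has_field_derivative (of_nat (Suc a) * (B a z * B (Suc b) z) + of_nat (Suc b) * (B (Suc a) z * B b z))) (at z)" for z
    using DERIV_mult[OF appell_B[unfolded appell_def, rule_format, of "Suc a" z] appell_B[unfolded appell_def, rule_format, of "Suc b" z]]
    by (simp add: algebra_simps)
  have F: "((\<lambda>u::real. of_nat (Suc a) * (B a (of_real u) * B (Suc b) (of_real u)) + of_nat (Suc b) * (B (Suc a) (of_real u) * B b (of_real u)))
     has_integral (B (Suc a) 1 * B (Suc b) 1 - B (Suc a) 0 * B (Suc b) 0)) {0..1}"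
    by (rule ftc01[OF d])
  define H where "H = (if b = 0 then 0 else (-1)^(b-1) * fact (Suc a) * fact b / fact (Suc a + b) * bn (Suc a + b))"
  have h: "((\<lambda>u::real. B (Suc a) (of_real u) * B b (of_real u)) has_integral H) {0..1}"
  proof (cases "b = 0")
    case True
    then show ?thesis using IB1[of "Suc a"] by (simp add: H_def B0)
  next
    case False
    then show ?thesis using Suc.IH[of "Suc a"] by (simp add: H_def)
  qed
  have "((\<lambda>u::real. (1 / of_nat (Suc a)) * ((of_nat (Suc a) * (B a (of_real u) * B (Suc b) (of_real u)) + of_nat (Suc b) * (B (Suc a) (of_real u) * B b (of_real u)))
      - of_nat (Suc b) * (B (Suc a) (of_real u) * B b (of_real u))))
     has_integral ((1 / of_nat (Suc a)) * ((B (Suc a) 1 * B (Suc b) 1 - B (Suc a) 0 * B (Suc b) 0) - of_nat (Suc b) * H))) {0..1}"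
    by (intro has_integral_mult_right has_integral_diff F h)
  moreover have "(\<lambda>u::real. (1 / of_nat (Suc a)) * ((of_nat (Suc a) * (B a (of_real u) * B (Suc b) (of_real u)) + of_nat (Suc b) * (B (Suc a) (of_real u) * B b (of_real u)))
      - of_nat (Suc b) * (B (Suc a) (of_real u) * B b (of_real u)))) = (\<lambda>u. B a (of_real u) * B (Suc b) (of_real u))"
    by (rule ext) (simp del: of_nat_Suc)
  moreover have "(1 / of_nat (Suc a)) * ((B (Suc a) 1 * B (Suc b) 1 - B (Suc a) 0 * B (Suc b) 0) - of_nat (Suc b) * H)
     = (-1)^(Suc b-1) * fact a * fact (Suc b) / fact (a + Suc b) * bn (a + Suc b)"
  proof (cases "b = 0")
    case True
    have "B (Suc a) 1 = bn (Suc a)" using Suc.prems by (simp add: B_at1)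
    moreover have "(1 + of_nat a :: complex) \<noteq> 0" by (metis of_nat_Suc of_nat_neq_0 add.commute)
    moreover have "(fact a :: complex) \<noteq> 0" by simp
    moreover have "fact a + fact a * of_nat a \<noteq> (0::complex)"
    proof -
      have "fact a + fact a * of_nat a = (fact a * (1 + of_nat a) :: complex)" by (simp add: algebra_simps)
      thus ?thesis using calculation by simp
    qed
    ultimately show ?thesis using True by (simp add: H_def B_at0 bn1c B1' field_simps)
  next
    case False
    have "B (Suc a) 1 = bn (Suc a)" "B (Suc b) 1 = bn (Suc b)" using Suc.prems False by (simp_all add: B_at1)
    moreover have "(-1)^(b-1) = - ((-1)^b :: complex)" using False by (cases b) auto
    moreover have "fact (Suc a) = (of_nat (Suc a) * fact a :: complex)" "fact (Suc b) = (of_nat (Suc b) * fact b :: complex)"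
      by (simp_all only: fact_Suc of_nat_mult)
    moreover have "Suc a + b = a + Suc b" by simp
    ultimately show ?thesis using False
      by (simp add: H_def B_at0 field_simps del: of_nat_Suc fact_Suc)
  qed
  ultimately show ?case by simp
qed

lemma sum_single: "j \<le> (N::nat) \<Longrightarrow> (\<And>k. k \<le> N \<Longrightarrow> k \<noteq> j \<Longrightarrow> f k = 0) \<Longrightarrow> (\<Sum>k\<le>N. f k) = (f j :: complex)"
proof -
  assume j: "j \<le> N" and z: "\<And>k. k \<le> N \<Longrightarrow> k \<noteq> j \<Longrightarrow> f k = 0"
  have "(\<Sum>k\<le>N. f k) = f j + (\<Sum>k\<in>{..N} - {j}. f k)" using j by (intro sum.remove) auto
  also have "(\<Sum>k\<in>{..N} - {j}. f k) = 0" by (rule sum.neutral) (auto intro: z)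
  finally show ?thesis by simp
qed

lemma sum_ends: "(N::nat) \<ge> 1 \<Longrightarrow> (\<Sum>k\<le>N. if k = 0 \<or> k = N then 0 else f k) = (\<Sum>k\<le>N. f k) - f 0 - (f N :: complex)"
proof -
  assume N: "N \<ge> 1"
  have "(\<Sum>k\<le>N. f k) = (\<Sum>k\<le>N. (if k = 0 \<or> k = N then 0 else f k) + ((if k = 0 then f k else 0) + (if k = N then f k else 0)))"
    using N by (intro sum.cong) auto
  also have "\<dots> = (\<Sum>k\<le>N. if k = 0 \<or> k = N then 0 else f k) + f 0 + f N"
    by (simp add: sum.distrib)
  finally show ?thesis by simp
qed

lemma IFF1: "((\<lambda>u::real. FF N s t B B (of_real u) 0) has_integral ((-1)^N * (s gchoose N) * bn N)) {0..1}"
proof -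
  have "((\<lambda>u::real. \<Sum>k\<le>N. (-1)^k * (s gchoose k) * (t gchoose (N-k)) * B (N-k) (of_real u) * B k 0) has_integral
     (\<Sum>k\<le>N. (-1)^k * (s gchoose k) * (t gchoose (N-k)) * (if N - k = 0 then 1 else 0) * B k 0)) {0..1}"
    by (intro has_integral_sum has_integral_mult_left has_integral_mult_right IB1) auto
  moreover have "(\<Sum>k\<le>N. (-1)^k * (s gchoose k) * (t gchoose (N-k)) * (if N - k = 0 then 1 else 0) * B k 0) = (-1)^N * (s gchoose N) * bn N"
    by (subst sum_single[of N]) (auto simp: B_at0)
  ultimately show ?thesis by (simp add: FF_def)
qed

lemma IFF2: "((\<lambda>u::real. FF N t r B B 0 (1 - of_real u)) has_integral ((r gchoose N) * bn N)) {0..1}"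
proof -
  have "((\<lambda>u::real. \<Sum>k\<le>N. (-1)^k * (t gchoose k) * (r gchoose (N-k)) * B (N-k) 0 * (-1)^k * B k (of_real u)) has_integral
     (\<Sum>k\<le>N. (-1)^k * (t gchoose k) * (r gchoose (N-k)) * B (N-k) 0 * (-1)^k * (if k = 0 then 1 else 0))) {0..1}"
    by (intro has_integral_sum has_integral_mult_left has_integral_mult_right IB1) auto
  moreover have "(\<Sum>k\<le>N. (-1)^k * (t gchoose k) * (r gchoose (N-k)) * B (N-k) 0 * (-1)^k * (if k = 0 then 1 else 0)) = (r gchoose N) * bn N"
    by (subst sum_single[of 0]) (auto simp: B_at0)
  ultimately show ?thesis by (simp add: FF_def B_refl mult.assoc)
qed

definition JJ :: "nat \<Rightarrow> nat \<Rightarrow> complex" where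
  "JJ N k = (if k = 0 \<or> k = N then 0 else (-1)^(k-1) * fact (N-k) * fact k / fact N * bn N)"

lemma IJJ: "N \<ge> 1 \<Longrightarrow> k \<le> N \<Longrightarrow> ((\<lambda>u::real. B (N-k) (of_real u) * B k (of_real u)) has_integral JJ N k) {0..1}"
proof -
  assume N: "N \<ge> 1" and k: "k \<le> N"
  consider "k = 0" | "k = N" | "k \<noteq> 0 \<and> k \<noteq> N" by blast
  then show ?thesis
  proof cases
    case 1 then show ?thesis using IB1[of N] N by (simp add: JJ_def B0)
  next
    case 2 then show ?thesis using IB1[of N] N by (simp add: JJ_def B0)
  next
    case 3
    then have "N - k \<ge> 1" "k \<ge> 1" using k by auto
    from IB2[OF this] show ?thesis using 3 k by (simp add: JJ_def)
  qed
qed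

lemma IFF3: "N \<ge> 1 \<Longrightarrow> ((\<lambda>u::real. FF N r s B B (1 - of_real u) (of_real u)) has_integral
   (\<Sum>k\<le>N. (-1)^k * (r gchoose k) * (s gchoose (N-k)) * (-1)^(N-k) * JJ N k)) {0..1}"
proof -
  assume N: "N \<ge> 1"
  have "((\<lambda>u::real. \<Sum>k\<le>N. (-1)^k * (r gchoose k) * (s gchoose (N-k)) * (-1)^(N-k) * (B (N-k) (of_real u) * B k (of_real u))) has_integral
     (\<Sum>k\<le>N. (-1)^k * (r gchoose k) * (s gchoose (N-k)) * (-1)^(N-k) * JJ N k)) {0..1}"
    by (intro has_integral_sum has_integral_mult_right IJJ N) auto
  thus ?thesis by (simp add: FF_def B_refl mult.assoc)
qed

lemma gb_suc: "of_nat (Suc k) * ((a::complex) gchoose Suc k) = (a - of_nat k) * (a gchoose k)"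
  using gbinomial_mult_1[of a k] by (simp add: algebra_simps)

lemma tele:
  fixes r s :: complex and N :: nat
  defines "a \<equiv> \<lambda>k. (-1)^k * (r gchoose k) * (s gchoose (N-k)) * fact k * fact (N-k) / fact N"
    and "\<beta> \<equiv> \<lambda>k. (-1)^k * (r gchoose k) * (s gchoose (Suc N-k)) * fact k * fact (Suc N-k) / fact N"
  shows "(of_nat N - r - s) * (\<Sum>k\<le>N. a k) = \<beta> (Suc N) - \<beta> 0"
proof -
  have "(\<Sum>k<Suc N. \<beta> (Suc k) - \<beta> k) = \<beta> (Suc N) - \<beta> 0" by (rule sum_lessThan_telescope)
  moreover have "\<beta> (Suc k) - \<beta> k = (of_nat N - r - s) * a k" if k: "k \<le> N" for k
  proof -
    have e1: "Suc N - Suc k = N - k" by simp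
    have e2: "Suc N - k = Suc (N - k)" using k by simp
    have "fact (Suc k) * (r gchoose Suc k) = fact k * (of_nat (Suc k) * (r gchoose Suc k))"
      by (simp only: fact_Suc mult_ac)
    also have "\<dots> = fact k * ((r - of_nat k) * (r gchoose k))" by (simp only: gb_suc)
    finally have f1: "fact (Suc k) * (r gchoose Suc k) = fact k * ((r - of_nat k) * (r gchoose k))" .
    have "fact (Suc (N-k)) * (s gchoose Suc (N-k)) = fact (N-k) * (of_nat (Suc (N-k)) * (s gchoose Suc (N-k)))"
      by (simp only: fact_Suc mult_ac)
    also have "\<dots> = fact (N-k) * ((s - of_nat (N-k)) * (s gchoose (N-k)))" by (simp only: gb_suc)
    finally have f2: "fact (Suc (N-k)) * (s gchoose Suc (N-k)) = fact (N-k) * ((s - of_nat (N-k)) * (s gchoose (N-k)))" .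
    have b1: "\<beta> (Suc k) = - (r - of_nat k) * a k"
    proof -
      have "\<beta> (Suc k) = (-1)^(Suc k) * (fact (Suc k) * (r gchoose Suc k)) * (s gchoose (N-k)) * fact (N-k) / fact N"
        unfolding \<beta>_def e1 by (simp only: mult_ac)
      also have "\<dots> = (-1)^(Suc k) * (fact k * ((r - of_nat k) * (r gchoose k))) * (s gchoose (N-k)) * fact (N-k) / fact N"
        by (simp only: f1)
      also have "\<dots> = - (r - of_nat k) * a k" unfolding a_def by (simp add: field_simps)
      finally show ?thesis .
    qed
    have b2: "\<beta> k = (s - of_nat (N-k)) * a k"
    proof -
      have "\<beta> k = (-1)^k * (r gchoose k) * (fact (Suc (N-k)) * (s gchoose Suc (N-k))) * fact k / fact N"
        unfolding \<beta>_def e2 by (simp only: mult_ac)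
      also have "\<dots> = (-1)^k * (r gchoose k) * (fact (N-k) * ((s - of_nat (N-k)) * (s gchoose (N-k)))) * fact k / fact N"
        by (simp only: f2)
      also have "\<dots> = (s - of_nat (N-k)) * a k" unfolding a_def by (simp add: field_simps)
      finally show ?thesis .
    qed
    have "of_nat (N-k) = (of_nat N - of_nat k :: complex)" using k by (simp add: of_nat_diff)
    thus ?thesis unfolding b1 b2 by (simp only:) (simp add: algebra_simps)
  qed
  ultimately show ?thesis by (simp add: sum_distrib_left lessThan_Suc_atMost)
qed

lemma GB_int:
  assumes N: "N \<ge> 1" and rst: "r + s + t = of_nat N"
  shows "((\<lambda>u::real. GB N r s t (of_real u) 0) has_integral 0) {0..1}"
proof -
  define I3 where "I3 = (\<Sum>k\<le>N. (-1)^k * (r gchoose k) * (s gchoose (N-k)) * (-1)^(N-k) * JJ N k)"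
  define a where "a = (\<lambda>k. (-1)^k * (r gchoose k) * (s gchoose (N-k)) * fact k * fact (N-k) / fact N :: complex)"
  define \<beta> where "\<beta> = (\<lambda>k. (-1)^k * (r gchoose k) * (s gchoose (Suc N-k)) * fact k * fact (Suc N-k) / fact N :: complex)"
  define \<sigma> where "\<sigma> = ((-1)^N :: complex)"
  have \<sigma>2: "\<sigma> * \<sigma> = 1" unfolding \<sigma>_def by (simp add: power_add[symmetric])
  have int: "((\<lambda>u::real. r * FF N s t B B (of_real u) 0 + s * FF N t r B B 0 (1 - of_real u) + t * FF N r s B B (1 - of_real u) (of_real u))
     has_integral (r * ((-1)^N * (s gchoose N) * bn N) + s * ((r gchoose N) * bn N) + t * I3)) {0..1}"
    unfolding I3_def by (intro has_integral_add has_integral_mult_right IFF1 IFF2 IFF3 N)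
  have "I3 = (\<Sum>k\<le>N. if k = 0 \<or> k = N then 0 else - \<sigma> * bn N * a k)"
    unfolding I3_def
  proof (rule sum.cong[OF refl])
    fix k assume "k \<in> {..N}"
    hence k: "k \<le> N" by simp
    show "(-1)^k * (r gchoose k) * (s gchoose (N-k)) * (-1)^(N-k) * JJ N k = (if k = 0 \<or> k = N then 0 else - \<sigma> * bn N * a k)"
    proof (cases "k = 0 \<or> k = N")
      case True then show ?thesis by (auto simp: JJ_def)
    next
      case False
      have e: "N - k + (k - 1) = N - 1" using False k by simp
      have "(-1)^(N-k) * (-1)^(k-1) = ((-1::complex)^(N-1 :: nat))"
        by (simp only: power_add[symmetric] e)
      also have "\<dots> = - \<sigma>" unfolding \<sigma>_def using N by (cases N) auto
      finally have p: "(-1)^(N-k) * (-1)^(k-1) = - \<sigma>" .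
      have "(-1)^k * (r gchoose k) * (s gchoose (N-k)) * (-1)^(N-k) * JJ N k =
         ((-1)^(N-k) * (-1)^(k-1)) * bn N * ((-1)^k * (r gchoose k) * (s gchoose (N-k)) * fact k * fact (N-k) / fact N)"
        using False by (simp add: JJ_def field_simps)
      then show ?thesis using False unfolding p a_def by simp
    qed
  qed
  also have "\<dots> = (\<Sum>k\<le>N. - \<sigma> * bn N * a k) - (- \<sigma> * bn N * a 0) - (- \<sigma> * bn N * a N)"
    by (rule sum_ends[OF N])
  also have "(\<Sum>k\<le>N. - \<sigma> * bn N * a k) = - \<sigma> * bn N * (\<Sum>k\<le>N. a k)"
    by (rule sum_distrib_left[symmetric])
  finally have I3e: "I3 = - \<sigma> * bn N * ((\<Sum>k\<le>N. a k) - a 0 - a N)"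
    by (simp add: algebra_simps)
  have a0: "a 0 = (s gchoose N)" by (simp add: a_def)
  have aN: "a N = \<sigma> * (r gchoose N)" by (simp add: a_def \<sigma>_def)
  have tl: "t * (\<Sum>k\<le>N. a k) = \<beta> (Suc N) - \<beta> 0"
  proof -
    have "t = of_nat N - r - s" using rst by (simp add: algebra_simps)
    thus ?thesis using tele[of N r s] unfolding a_def \<beta>_def by simp
  qed
  have bSN: "\<beta> (Suc N) = - \<sigma> * ((r - of_nat N) * (r gchoose N))"
  proof -
    have "\<beta> (Suc N) = (-1)^(Suc N) * (fact (Suc N) * (r gchoose Suc N)) / fact N" by (simp add: \<beta>_def)
    also have "fact (Suc N) * (r gchoose Suc N) = fact N * (of_nat (Suc N) * (r gchoose Suc N))"
      by (simp only: fact_Suc mult_ac)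
    also have "\<dots> = fact N * ((r - of_nat N) * (r gchoose N))" by (simp only: gb_suc)
    finally show ?thesis by (simp add: \<sigma>_def)
  qed
  have b0: "\<beta> 0 = (s - of_nat N) * (s gchoose N)"
  proof -
    have "\<beta> 0 = (fact (Suc N) * (s gchoose Suc N)) / fact N" by (simp add: \<beta>_def)
    also have "fact (Suc N) * (s gchoose Suc N) = fact N * (of_nat (Suc N) * (s gchoose Suc N))"
      by (simp only: fact_Suc mult_ac)
    also have "\<dots> = fact N * ((s - of_nat N) * (s gchoose N))" by (simp only: gb_suc)
    finally show ?thesis by simp
  qed
  have "r * ((-1)^N * (s gchoose N) * bn N) + s * ((r gchoose N) * bn N) + t * I3 =
     bn N * (r * \<sigma> * (s gchoose N) + s * (r gchoose N) - \<sigma> * (t * (\<Sum>k\<le>N. a k)) + \<sigma> * t * a 0 + \<sigma> * t * a N)"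
    unfolding I3e \<sigma>_def by (simp add: algebra_simps)
  also have "\<dots> = bn N * (\<sigma> * (s gchoose N) * (r + s + t - of_nat N) + (r gchoose N) * (r + s + t - of_nat N))"
  proof -
    have \<sigma>3: "\<sigma> * (\<sigma> * X) = X" for X by (simp add: mult.assoc[symmetric] \<sigma>2)
    show ?thesis unfolding tl bSN b0 a0 aN by (simp add: algebra_simps \<sigma>3)
  qed
  also have "\<dots> = 0" using rst by simp
  finally have val: "r * ((-1)^N * (s gchoose N) * bn N) + s * ((r gchoose N) * bn N) + t * I3 = 0" .
  have "(\<lambda>u::real. GB N r s t (of_real u) 0) = (\<lambda>u::real. r * FF N s t B B (of_real u) 0 + s * FF N t r B B 0 (1 - of_real u) + t * FF N r s B B (1 - of_real u) (of_real u))"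
    by (simp add: GB_def)
  with int val show ?thesis by simp
qed

theorem GB_zero: "r + s + t = of_nat N \<Longrightarrow> GB N r s t x y = 0"
proof (induction N arbitrary: r s t x y)
  case 0
  then show ?case by (simp add: GB_def FF0 B0)
next
  case (Suc M)
  have cx: "GB (Suc M) r' s' t' x' y' = GB (Suc M) r' s' t' 0 y'" if "r' + s' + t' = of_nat (Suc M)" for r' s' t' x' y'
    by (rule GB_const_x[OF Suc.IH that])
  have "GB (Suc M) r s t x y = GB (Suc M) t r s (1-y) 0" using cx[OF Suc.prems] GB_cyc by simp
  moreover have tr: "t + r + s = of_nat (Suc M)" using Suc.prems by (simp add: algebra_simps)
  have "GB (Suc M) t r s (of_real u) 0 = GB (Suc M) t r s (1-y) 0" for u
    using cx[OF tr, of "of_real u" 0] cx[OF tr, of "1-y" 0] by simp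
  hence "(\<lambda>u::real. GB (Suc M) t r s (of_real u) 0) = (\<lambda>u. GB (Suc M) t r s (1-y) 0)" by auto
  with GB_int[of "Suc M" t r s] tr have "((\<lambda>u::real. GB (Suc M) t r s (1-y) 0) has_integral 0) {0..1}" by simp
  moreover have "((\<lambda>u::real. GB (Suc M) t r s (1-y) 0) has_integral GB (Suc M) t r s (1-y) 0) {0..1}"
    using has_integral_const_real[of "GB (Suc M) t r s (1-y) 0" 0 1] by simp
  ultimately show ?case using has_integral_unique by metis
qed

definition GE :: "nat \<Rightarrow> complex \<Rightarrow> complex \<Rightarrow> complex \<Rightarrow> complex \<Rightarrow> complex \<Rightarrow> complex" where
  "GE M r s t x y = r / 2 * FF M s t E E x y + FF (Suc M) t r B E y (1-x-y) - FF (Suc M) r s E B (1-x-y) x"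

lemma GE_dx:
  assumes "r + s + t = of_nat (Suc K)"
  shows "((\<lambda>x. GE (Suc K) r s t x y) has_field_derivative (t * GE K r s (t-1) x y)) (at x)"
proof -
  have d1: "((\<lambda>x. FF (Suc K) s t E E x y) has_field_derivative (1 * t * FF K s (t-1) E E x y - 0 * s * FF K (s-1) t E E x y)) (at x)"
    by (rule FF_deriv[OF appell_E appell_E]) (auto intro!: derivative_eq_intros)
  have d2: "((\<lambda>x. FF (Suc (Suc K)) t r B E y (1-x-y)) has_field_derivative (0 * r * FF (Suc K) t (r-1) B E y (1-x-y) - (-1) * t * FF (Suc K) (t-1) r B E y (1-x-y))) (at x)"
    by (rule FF_deriv[OF appell_B appell_E]) (auto intro!: derivative_eq_intros)
  have d3: "((\<lambda>x. FF (Suc (Suc K)) r s E B (1-x-y) x) has_field_derivative ((-1) * s * FF (Suc K) r (s-1) E B (1-x-y) x - 1 * r * FF (Suc K) (r-1) s E B (1-x-y) x)) (at x)"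
    by (rule FF_deriv[OF appell_E appell_B]) (auto intro!: derivative_eq_intros)
  have c: "s * FF (Suc K) r (s-1) E B (1-x-y) x + r * FF (Suc K) (r-1) s E B (1-x-y) x = (r + s - of_nat (Suc K)) * FF (Suc K) r s E B (1-x-y) x"
    by (rule FF_comb)
  have rs: "r + s - of_nat (Suc K) = - t" using assms by (simp add: algebra_simps)
  have "((\<lambda>x. GE (Suc K) r s t x y) has_field_derivative
     (r / 2 * (1 * t * FF K s (t-1) E E x y - 0 * s * FF K (s-1) t E E x y) + (0 * r * FF (Suc K) t (r-1) B E y (1-x-y) - (-1) * t * FF (Suc K) (t-1) r B E y (1-x-y))
      - ((-1) * s * FF (Suc K) r (s-1) E B (1-x-y) x - 1 * r * FF (Suc K) (r-1) s E B (1-x-y) x))) (at x)"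
    unfolding GE_def by (intro DERIV_add DERIV_diff DERIV_cmult d1 d2 d3)
  moreover have "r / 2 * (1 * t * FF K s (t-1) E E x y - 0 * s * FF K (s-1) t E E x y) + (0 * r * FF (Suc K) t (r-1) B E y (1-x-y) - (-1) * t * FF (Suc K) (t-1) r B E y (1-x-y))
      - ((-1) * s * FF (Suc K) r (s-1) E B (1-x-y) x - 1 * r * FF (Suc K) (r-1) s E B (1-x-y) x) = t * GE K r s (t-1) x y"
  proof -
    have "- ((-1) * s * FF (Suc K) r (s-1) E B (1-x-y) x - 1 * r * FF (Suc K) (r-1) s E B (1-x-y) x) = (s * FF (Suc K) r (s-1) E B (1-x-y) x + r * FF (Suc K) (r-1) s E B (1-x-y) x)"
      by (simp add: algebra_simps)
    also have "\<dots> = - t * FF (Suc K) r s E B (1-x-y) x" unfolding c rs by simp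
    finally have eq3: "- ((-1) * s * FF (Suc K) r (s-1) E B (1-x-y) x - 1 * r * FF (Suc K) (r-1) s E B (1-x-y) x) = - t * FF (Suc K) r s E B (1-x-y) x" .
    show ?thesis unfolding diff_conv_add_uminus[of _ "((-1) * s * FF (Suc K) r (s-1) E B (1-x-y) x - 1 * r * FF (Suc K) (r-1) s E B (1-x-y) x)"] eq3
      by (simp add: GE_def algebra_simps)
  qed
  ultimately show ?thesis by simp
qed

lemma GE_dy:
  assumes "r + s + t = of_nat (Suc K)"
  shows "((\<lambda>y. GE (Suc K) r s t x y) has_field_derivative (- s * GE K r (s-1) t x y)) (at y)"
proof -
  have d1: "((\<lambda>y. FF (Suc K) s t E E x y) has_field_derivative (0 * t * FF K s (t-1) E E x y - 1 * s * FF K (s-1) t E E x y)) (at y)"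
    by (rule FF_deriv[OF appell_E appell_E]) (auto intro!: derivative_eq_intros)
  have d2: "((\<lambda>y. FF (Suc (Suc K)) t r B E y (1-x-y)) has_field_derivative (1 * r * FF (Suc K) t (r-1) B E y (1-x-y) - (-1) * t * FF (Suc K) (t-1) r B E y (1-x-y))) (at y)"
    by (rule FF_deriv[OF appell_B appell_E]) (auto intro!: derivative_eq_intros)
  have d3: "((\<lambda>y. FF (Suc (Suc K)) r s E B (1-x-y) x) has_field_derivative ((-1) * s * FF (Suc K) r (s-1) E B (1-x-y) x - 0 * r * FF (Suc K) (r-1) s E B (1-x-y) x)) (at y)"
    by (rule FF_deriv[OF appell_E appell_B]) (auto intro!: derivative_eq_intros)
  have c: "r * FF (Suc K) t (r-1) B E y (1-x-y) + t * FF (Suc K) (t-1) r B E y (1-x-y) = (t + r - of_nat (Suc K)) * FF (Suc K) t r B E y (1-x-y)"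
    by (rule FF_comb)
  have rs: "t + r - of_nat (Suc K) = - s" using assms by (simp add: algebra_simps)
  have "((\<lambda>y. GE (Suc K) r s t x y) has_field_derivative
     (r / 2 * (0 * t * FF K s (t-1) E E x y - 1 * s * FF K (s-1) t E E x y) + (1 * r * FF (Suc K) t (r-1) B E y (1-x-y) - (-1) * t * FF (Suc K) (t-1) r B E y (1-x-y))
      - ((-1) * s * FF (Suc K) r (s-1) E B (1-x-y) x - 0 * r * FF (Suc K) (r-1) s E B (1-x-y) x))) (at y)"
    unfolding GE_def by (intro DERIV_add DERIV_diff DERIV_cmult d1 d2 d3)
  moreover have "r / 2 * (0 * t * FF K s (t-1) E E x y - 1 * s * FF K (s-1) t E E x y) + (1 * r * FF (Suc K) t (r-1) B E y (1-x-y) - (-1) * t * FF (Suc K) (t-1) r B E y (1-x-y))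
      - ((-1) * s * FF (Suc K) r (s-1) E B (1-x-y) x - 0 * r * FF (Suc K) (r-1) s E B (1-x-y) x) = - s * GE K r (s-1) t x y"
  proof -
    have "(1 * r * FF (Suc K) t (r-1) B E y (1-x-y) - (-1) * t * FF (Suc K) (t-1) r B E y (1-x-y)) = - s * FF (Suc K) t r B E y (1-x-y)"
      using c rs by simp
    thus ?thesis unfolding diff_conv_add_uminus[of _ "(1 * r * FF (Suc K) t (r-1) B E y (1-x-y) - (-1) * t * FF (Suc K) (t-1) r B E y (1-x-y))"] by (simp add: GE_def algebra_simps)
  qed
  ultimately show ?thesis by simp
qed

lemma GE0: "r + s + t = 0 \<Longrightarrow> GE 0 r s t x y = 0"
proof -
  assume rst: "r + s + t = 0"
  have E1': "E (Suc 0) z = z - 1/2" for z using E1[of z] by simp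
  have f1: "FF (Suc 0) t r B E y (1-x-y) = r * (y - 1/2) - t * (1 - x - y - 1/2)"
    by (simp add: FF_def B1' E1' B0 E0)
  have f2: "FF (Suc 0) r s E B (1-x-y) x = s * (1 - x - y - 1/2) - r * (x - 1/2)"
    by (simp add: FF_def B1' E1' B0 E0)
  have ts: "t + s = - r"
  proof -
    have "t + s = (r + s + t) - r" by (simp add: algebra_simps)
    thus ?thesis using rst by simp
  qed
  have "GE 0 r s t x y = r/2 + r * (y - 1/2) + r * (x - 1/2) - (t + s) * (1/2 - x - y)"
    unfolding GE_def FF0 E0 f1 f2 by (simp add: algebra_simps)
  also have "\<dots> = 0" unfolding ts by (simp add: algebra_simps)
  finally show ?thesis .
qed

lemma E_10': "E m 1 + E m 0 = (if m = 0 then 2 else 0)" by (rule E_10)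

lemma GE_S1: "FF M s t E E 0 0 + FF M s t E E 1 0 = 2 * (-1)^M * (s gchoose M) * E M 0"
proof -
  have "FF M s t E E 0 0 + FF M s t E E 1 0 = (\<Sum>k\<le>M. (-1)^k * (s gchoose k) * (t gchoose (M-k)) * (E (M-k) 1 + E (M-k) 0) * E k 0)"
    by (simp add: FF_def sum.distrib[symmetric] algebra_simps)
  also have "\<dots> = (\<Sum>k\<le>M. (-1)^k * (s gchoose k) * (t gchoose (M-k)) * (if M - k = 0 then 2 else 0) * E k 0)"
    by (simp only: E_10')
  also have "\<dots> = 2 * (-1)^M * (s gchoose M) * E M 0"
    by (subst sum_single[of M]) auto
  finally show ?thesis .
qed

lemma GE_S2: "FF (Suc M) t r B E 0 1 + FF (Suc M) t r B E 0 0 = 2 * (r gchoose Suc M) * bn (Suc M)"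
proof -
  have "FF (Suc M) t r B E 0 1 + FF (Suc M) t r B E 0 0 = (\<Sum>k\<le>Suc M. (-1)^k * (t gchoose k) * (r gchoose (Suc M-k)) * B (Suc M-k) 0 * (E k 1 + E k 0))"
    by (simp add: FF_def sum.distrib[symmetric] algebra_simps)
  also have "\<dots> = (\<Sum>k\<le>Suc M. (-1)^k * (t gchoose k) * (r gchoose (Suc M-k)) * B (Suc M-k) 0 * (if k = 0 then 2 else 0))"
    by (simp only: E_10')
  also have "\<dots> = 2 * (r gchoose Suc M) * bn (Suc M)"
    by (subst sum_single[of 0]) (auto simp: B_at0)
  finally show ?thesis .
qed

lemma GE_S3: "FF (Suc M) r s E B 1 0 + FF (Suc M) r s E B 0 1 = 2 * (-1)^(Suc M) * (r gchoose Suc M) * bn (Suc M) - r * (s gchoose M) * E M 0"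
proof -
  have "FF (Suc M) r s E B 1 0 + FF (Suc M) r s E B 0 1 = (\<Sum>k\<le>Suc M. (-1)^k * (r gchoose k) * (s gchoose (Suc M-k)) * (E (Suc M-k) 1 * B k 0 + E (Suc M-k) 0 * B k 1))"
    by (simp add: FF_def sum.distrib[symmetric] algebra_simps)
  also have "\<dots> = (\<Sum>k\<le>Suc M. (-1)^k * (r gchoose k) * (s gchoose (Suc M-k)) * bn k * (E (Suc M-k) 1 + E (Suc M-k) 0))
     + (\<Sum>k\<le>Suc M. (-1)^k * (r gchoose k) * (s gchoose (Suc M-k)) * E (Suc M-k) 0 * (if k = 1 then 1 else 0))"
    by (simp add: sum.distrib[symmetric] B_at1 B_at0 algebra_simps)
  also have "\<dots> = (\<Sum>k\<le>Suc M. (-1)^k * (r gchoose k) * (s gchoose (Suc M-k)) * bn k * (if Suc M - k = 0 then 2 else 0))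
     + (\<Sum>k\<le>Suc M. (-1)^k * (r gchoose k) * (s gchoose (Suc M-k)) * E (Suc M-k) 0 * (if k = 1 then 1 else 0))"
    by (simp only: E_10')
  also have "(\<Sum>k\<le>Suc M. (-1)^k * (r gchoose k) * (s gchoose (Suc M-k)) * bn k * (if Suc M - k = 0 then 2 else 0))
     = 2 * (-1)^(Suc M) * (r gchoose Suc M) * bn (Suc M)"
    by (subst sum_single[of "Suc M"]) auto
  also have "(\<Sum>k\<le>Suc M. (-1)^k * (r gchoose k) * (s gchoose (Suc M-k)) * E (Suc M-k) 0 * (if k = 1 then 1 else 0))
     = - r * (s gchoose M) * E M 0"
    by (subst sum_single[of 1]) auto
  finally show ?thesis by simp
qed

lemma GE_ends: assumes "M \<ge> 1" shows "GE M r s t 0 0 + GE M r s t 1 0 = 0"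
proof -
  have "GE M r s t 0 0 + GE M r s t 1 0 = r / 2 * (FF M s t E E 0 0 + FF M s t E E 1 0) + (FF (Suc M) t r B E 0 1 + FF (Suc M) t r B E 0 0)
     - (FF (Suc M) r s E B 1 0 + FF (Suc M) r s E B 0 1)"
    by (simp add: GE_def algebra_simps)
  also have "\<dots> = r * (s gchoose M) * E M 0 * ((-1)^M + 1) + 2 * (r gchoose Suc M) * bn (Suc M) * (1 + (-1)^M)"
    unfolding GE_S1 GE_S2 GE_S3 by (simp add: algebra_simps)
  also have "\<dots> = 0"
  proof (cases "even M")
    case True
    have "E M 0 = 0" using E_even0[OF True] assms by simp
    moreover have "bernoulli_num (Suc M) = 0" using bn_odd[of "Suc M"] True assms by simp
    ultimately show ?thesis by simp
  next
    case False then show ?thesis by simp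
  qed
  finally show ?thesis .
qed

theorem GE_zero: "r + s + t = of_nat M \<Longrightarrow> GE M r s t x y = 0"
proof (induction M arbitrary: r s t x y)
  case 0 then show ?case using GE0 by simp
next
  case (Suc K)
  have cx: "GE (Suc K) r s t x' y' = GE (Suc K) r s t 0 y'" for x' y'
  proof -
    have "((\<lambda>x. GE (Suc K) r s t x y') has_field_derivative 0) (at w)" for w
      using GE_dx[OF Suc.prems, of y' w] Suc.IH[of r s "t-1" w y'] Suc.prems by (simp add: algebra_simps)
    thus ?thesis by (rule deriv_const)
  qed
  have cy: "GE (Suc K) r s t 0 y' = GE (Suc K) r s t 0 0" for y'
  proof -
    have "((\<lambda>y. GE (Suc K) r s t 0 y) has_field_derivative 0) (at w)" for w
      using GE_dy[OF Suc.prems, of 0 w] Suc.IH[of r "s-1" t 0 w] Suc.prems by (simp add: algebra_simps)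
    thus ?thesis by (rule deriv_const)
  qed
  have "GE (Suc K) r s t 0 0 + GE (Suc K) r s t 1 0 = 0" by (rule GE_ends) simp
  moreover have "GE (Suc K) r s t 1 0 = GE (Suc K) r s t 0 0" using cx by simp
  ultimately have "GE (Suc K) r s t 0 0 = 0" by simp
  thus ?case using cx cy by simp
qed



lemma sum_rev_ivl: "a \<le> b \<Longrightarrow> b \<le> (n::nat) \<Longrightarrow> (\<Sum>j=a..b. g j) = (\<Sum>k=n-b..n-a. g (n - k))"
  by (rule sum.reindex_bij_witness[of _ "\<lambda>k. n - k" "\<lambda>j. n - j"]) auto

lemma sum_pad: "a \<le> b \<Longrightarrow> b \<le> N \<Longrightarrow> (\<And>k. k \<le> N \<Longrightarrow> k < a \<or> b < k \<Longrightarrow> g k = 0) \<Longrightarrow>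
  (\<Sum>k\<le>N. g k) = (\<Sum>k=a..(b::nat). (g k :: complex))"
  by (rule sum.mono_neutral_right) auto

lemma gneg: "of_nat m - a - 1 = (of_nat p :: complex) \<Longrightarrow> (a gchoose m) = (-1)^m * of_nat (p choose m)"
  by (simp add: gbinomial_negated_upper[of a m] binomial_gbinomial)

lemma m1pow: "k \<le> N \<Longrightarrow> (-1)^k * (-1)^(N-k) = ((-1)^N :: complex)"
  by (simp add: power_add[symmetric])

lemma cor2_a:
  assumes "l \<le> n"
  shows "FF (n+l) (of_nat n) (of_nat n) B B (1-x) y = (-1)^(n+l) *
     (\<Sum>k = 0..n - l. of_nat (n choose k) * of_nat (n choose (k + l)) * B (k + l) x * B (n - k) y)"
proof -
  define N where "N = n + l"
  define g where "g k = of_nat (n choose k) * of_nat (n choose (N-k)) * B (N-k) x * B k y" for k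
  have "FF N (of_nat n) (of_nat n) B B (1-x) y = (\<Sum>k\<le>N. (-1)^N * g k)"
    unfolding FF_def
  proof (rule sum.cong[OF refl])
    fix k assume "k \<in> {..N}"
    hence k: "k \<le> N" by simp
    show "(-1)^k * (of_nat n gchoose k) * (of_nat n gchoose (N-k)) * B (N-k) (1-x) * B k y = (-1)^N * g k"
      using m1pow[OF k] unfolding g_def B_refl binomial_gbinomial[symmetric]
      by (simp add: mult_ac)
  qed
  also have "\<dots> = (-1)^N * (\<Sum>k\<le>N. g k)" by (simp add: sum_distrib_left)
  also have "(\<Sum>k\<le>N. g k) = (\<Sum>k=l..n. g k)"
    by (rule sum_pad) (use assms in \<open>auto simp: g_def N_def\<close>)
  also have "\<dots> = (\<Sum>j=0..n-l. g (n - j))"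
    using sum_rev_ivl[of l n n g] assms by simp
  also have "\<dots> = (\<Sum>k = 0..n - l. of_nat (n choose k) * of_nat (n choose (k + l)) * B (k + l) x * B (n - k) y)"
  proof (rule sum.cong[OF refl])
    fix j assume "j \<in> {0..n-l}"
    hence j: "j \<le> n - l" by simp
    have "N - (n - j) = j + l" using j assms by (simp add: N_def)
    moreover have "n choose (n - j) = n choose j" using j by (simp add: binomial_symmetric[symmetric])
    ultimately show "g (n - j) = of_nat (n choose j) * of_nat (n choose (j + l)) * B (j + l) x * B (n - j) y"
      by (simp add: g_def)
  qed
  finally show ?thesis by (simp add: N_def)
qed

lemma cor2_b:
  assumes "l < n"
  shows "FF (n+l) (of_nat n) (of_nat l - of_nat n) B B y (x-y) = (-1)^(n+l) *
     (\<Sum>k = 0..n. of_nat (n choose k) * of_nat ((k + n - 1) choose (k + l)) * B (k + l) y * B (n - k) (x - y))"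
proof -
  define N where "N = n + l"
  define h where "h k = of_nat (n choose k) * of_nat ((2*n - k - 1) choose (N-k)) * B (N-k) y * B k (x-y)" for k
  have "FF N (of_nat n) (of_nat l - of_nat n) B B y (x-y) = (\<Sum>k\<le>N. (-1)^N * h k)"
    unfolding FF_def
  proof (rule sum.cong[OF refl])
    fix k assume "k \<in> {..N}"
    hence k: "k \<le> N" by simp
    show "(-1)^k * (of_nat n gchoose k) * ((of_nat l - of_nat n) gchoose (N-k)) * B (N-k) y * B k (x-y) = (-1)^N * h k"
    proof (cases "k \<le> n")
      case True
      have "of_nat (N-k) - (of_nat l - of_nat n) - 1 = (of_nat (2*n - k - 1) :: complex)"
        using True assms k by (simp add: N_def of_nat_diff)
      from gneg[OF this] show ?thesis
        using m1pow[OF k] unfolding h_def binomial_gbinomial[symmetric] by (simp add: mult_ac)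
    next
      case False
      then show ?thesis by (simp add: h_def binomial_gbinomial[symmetric])
    qed
  qed
  also have "\<dots> = (-1)^N * (\<Sum>k\<le>N. h k)" by (simp add: sum_distrib_left)
  also have "(\<Sum>k\<le>N. h k) = (\<Sum>k=0..n. h k)"
    by (rule sum_pad) (use assms in \<open>auto simp: h_def N_def\<close>)
  also have "\<dots> = (\<Sum>j=0..n. h (n - j))"
    using sum_rev_ivl[of 0 n n h] assms by simp
  also have "\<dots> = (\<Sum>k = 0..n. of_nat (n choose k) * of_nat ((k + n - 1) choose (k + l)) * B (k + l) y * B (n - k) (x - y))"
  proof (rule sum.cong[OF refl])
    fix j assume "j \<in> {0..n}"
    hence j: "j \<le> n" by simp
    have "N - (n - j) = j + l" using j assms by (simp add: N_def)
    moreover have "2*n - (n - j) - 1 = j + n - 1" using j by simp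
    moreover have "n choose (n - j) = n choose j" using j by (simp add: binomial_symmetric[symmetric])
    ultimately show "h (n - j) = of_nat (n choose j) * of_nat ((j + n - 1) choose (j + l)) * B (j + l) y * B (n - j) (x - y)"
      by (simp add: h_def)
  qed
  finally show ?thesis by (simp add: N_def)
qed

lemma cor2_c:
  assumes "l < n"
  shows "FF (n+l) (of_nat l - of_nat n) (of_nat n) B B (x-y) (1-x) = (-1)^(n+l) *
     (\<Sum>k = 0..n. of_nat (n choose k) * of_nat ((k + n - 1) choose (k + l)) * ((-1) ^ (n - k) * B (k + l) x) * B (n - k) (x - y))"
proof -
  define N where "N = n + l"
  define q where "q k = (-1)^k * of_nat ((k + n - l - 1) choose k) * of_nat (n choose (N-k)) * B (N-k) (x-y) * B k x" for k
  have "FF N (of_nat l - of_nat n) (of_nat n) B B (x-y) (1-x) = (\<Sum>k\<le>N. q k)"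
    unfolding FF_def
  proof (rule sum.cong[OF refl])
    fix k assume "k \<in> {..N}"
    hence k: "k \<le> N" by simp
    show "(-1)^k * ((of_nat l - of_nat n) gchoose k) * (of_nat n gchoose (N-k)) * B (N-k) (x-y) * B k (1-x) = q k"
    proof (cases "l \<le> k")
      case True
      have "of_nat k - (of_nat l - of_nat n) - 1 = (of_nat (k + n - l - 1) :: complex)"
        using True assms k by (simp add: N_def of_nat_diff)
      from gneg[OF this] have g: "((of_nat l - of_nat n :: complex) gchoose k) = (-1)^k * of_nat ((k + n - l - 1) choose k)" .
      have p: "(-1::complex)^k * (-1)^k = 1" by (simp add: power_add[symmetric])
      show ?thesis unfolding q_def g B_refl binomial_gbinomial[symmetric]
        by (simp add: mult_ac)
    next
      case False
      hence "n < N - k" using k by (simp add: N_def)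
      then show ?thesis by (simp add: q_def binomial_gbinomial[symmetric])
    qed
  qed
  also have "(\<Sum>k\<le>N. q k) = (\<Sum>k=l..n+l. q k)"
    by (rule sum_pad) (use assms in \<open>auto simp: q_def N_def\<close>)
  also have "\<dots> = (\<Sum>j=0..n. q (j + l))"
    using sum.shift_bounds_cl_nat_ivl[of q 0 l n] by simp
  also have "\<dots> = (\<Sum>j = 0..n. (-1)^N * (of_nat (n choose j) * of_nat ((j + n - 1) choose (j + l)) * ((-1) ^ (n - j) * B (j + l) x) * B (n - j) (x - y)))"
  proof (rule sum.cong[OF refl])
    fix j assume "j \<in> {0..n}"
    hence j: "j \<le> n" by simp
    have "N - (j + l) = n - j" using j by (simp add: N_def)
    moreover have "j + l + n - l - 1 = j + n - 1" by simp
    moreover have "n choose (n - j) = n choose j" using j by (simp add: binomial_symmetric[symmetric])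
    moreover have "(-1::complex)^(j+l) = (-1)^N * (-1)^(n-j)"
    proof -
      have e: "N + (n - j) = (j + l) + ((n - j) + (n - j))" using j by (simp add: N_def)
      have "(-1::complex)^N * (-1)^(n-j) = (-1)^(j+l) * ((-1)^(n-j) * (-1)^(n-j))"
        by (simp only: power_add[symmetric] e)
      also have "\<dots> = (-1)^(j+l)" by (simp add: power_add[symmetric])
      finally show ?thesis by simp
    qed
    ultimately show "q (j + l) = (-1)^N * (of_nat (n choose j) * of_nat ((j + n - 1) choose (j + l)) * ((-1) ^ (n - j) * B (j + l) x) * B (n - j) (x - y))"
      by (simp add: q_def mult_ac)
  qed
  finally show ?thesis by (simp add: N_def sum_distrib_left)
qed

lemma cor2:
  fixes n l :: nat and x y :: complex
  assumes "n > l"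
  shows "of_nat (n - l) / of_nat n *
      (\<Sum>k = 0..n - l. of_nat (n choose k) * of_nat (n choose (k + l))
          * bernoulli_poly (k + l) x * bernoulli_poly (n - k) y)
    = (\<Sum>k = 0..n. of_nat (n choose k) * of_nat ((k + n - 1) choose (k + l))
          * ((-1) ^ (n - k) * bernoulli_poly (k + l) x + bernoulli_poly (k + l) y)
          * bernoulli_poly (n - k) (x - y))"
proof -
  define S where "S = (\<Sum>k = 0..n - l. of_nat (n choose k) * of_nat (n choose (k + l)) * B (k + l) x * B (n - k) y)"
  define Ry where "Ry = (\<Sum>k = 0..n. of_nat (n choose k) * of_nat ((k + n - 1) choose (k + l)) * B (k + l) y * B (n - k) (x - y))"
  define Rx where "Rx = (\<Sum>k = 0..n. of_nat (n choose k) * of_nat ((k + n - 1) choose (k + l)) * ((-1) ^ (n - k) * B (k + l) x) * B (n - k) (x - y))"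
  define \<sigma> where "\<sigma> = ((-1)^(n+l) :: complex)"
  have \<sigma>: "\<sigma> \<noteq> 0" by (simp add: \<sigma>_def)
  have "GB (n+l) (of_nat l - of_nat n) (of_nat n) (of_nat n) (1-x) y = 0"
    by (rule GB_zero) simp
  moreover have "GB (n+l) (of_nat l - of_nat n) (of_nat n) (of_nat n) (1-x) y =
     (of_nat l - of_nat n) * FF (n+l) (of_nat n) (of_nat n) B B (1-x) y + of_nat n * FF (n+l) (of_nat n) (of_nat l - of_nat n) B B y (x-y)
     + of_nat n * FF (n+l) (of_nat l - of_nat n) (of_nat n) B B (x-y) (1-x)"
    by (simp add: GB_def)
  ultimately have "(of_nat l - of_nat n) * (\<sigma> * S) + of_nat n * (\<sigma> * Ry) + of_nat n * (\<sigma> * Rx) = 0"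
    unfolding cor2_a[OF less_imp_le[OF assms]] cor2_b[OF assms] cor2_c[OF assms] S_def Ry_def Rx_def \<sigma>_def
    by simp
  hence "\<sigma> * ((of_nat l - of_nat n) * S + of_nat n * (Rx + Ry)) = 0" by (simp add: algebra_simps)
  hence "(of_nat l - of_nat n) * S + of_nat n * (Rx + Ry) = 0" using \<sigma> by simp
  hence e: "(of_nat n - of_nat l) * S = of_nat n * (Rx + Ry)" by (simp add: algebra_simps eq_neg_iff_add_eq_0[symmetric])
  have "(\<Sum>k = 0..n. of_nat (n choose k) * of_nat ((k + n - 1) choose (k + l))
          * ((-1) ^ (n - k) * B (k + l) x + B (k + l) y) * B (n - k) (x - y)) = Rx + Ry"
    unfolding Rx_def Ry_def by (simp add: sum.distrib[symmetric] algebra_simps)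
  moreover have "of_nat (n - l) / of_nat n * S = Rx + Ry"
  proof -
    have e2: "of_nat (n - l) * S = of_nat n * (Rx + Ry)" using e assms by (simp add: of_nat_diff)
    have nz: "(of_nat n :: complex) \<noteq> 0" using assms by simp
    have "of_nat (n - l) / of_nat n * S = (of_nat (n - l) * S) / of_nat n" by simp
    also have "\<dots> = Rx + Ry" unfolding e2 using nz by simp
    finally show ?thesis .
  qed
  ultimately show ?thesis unfolding S_def by simp
qed

lemma cor1_a:
  assumes "l < n"
  shows "FF (n+l-1) (of_nat n) (of_nat n) E E (1-x) y = (-1)^(n+l-1) *
     (\<Sum>k = (if l = 0 then 1 else 0)..n. of_nat (n choose k) * of_nat (n choose (k + l - 1)) * E (k + l - 1) x * E (n - k) y)"
proof -
  define M where "M = n + l - 1"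
  define g where "g k = of_nat (n choose k) * of_nat (n choose (M-k)) * E (M-k) x * E k y" for k
  have "FF M (of_nat n) (of_nat n) E E (1-x) y = (\<Sum>k\<le>M. (-1)^M * g k)"
    unfolding FF_def
  proof (rule sum.cong[OF refl])
    fix k assume "k \<in> {..M}"
    hence k: "k \<le> M" by simp
    show "(-1)^k * (of_nat n gchoose k) * (of_nat n gchoose (M-k)) * E (M-k) (1-x) * E k y = (-1)^M * g k"
      using m1pow[OF k] unfolding g_def E_refl binomial_gbinomial[symmetric]
      by (simp add: mult_ac)
  qed
  also have "\<dots> = (-1)^M * (\<Sum>k\<le>M. g k)" by (simp add: sum_distrib_left)
  also have "(\<Sum>k\<le>M. g k) = (\<Sum>j=(if l = 0 then 1 else 0)..n. g (n - j))"
  proof (cases "l = 0")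
    case True
    have "(\<Sum>k\<le>M. g k) = (\<Sum>k=0..n-1. g k)" by (simp add: M_def True atLeast0AtMost)
    also have "\<dots> = (\<Sum>j=n-(n-1)..n-0. g (n - j))" by (rule sum_rev_ivl) auto
    also have "n - (n-1) = 1" using assms by simp
    finally show ?thesis using True by simp
  next
    case False
    have "(\<Sum>k\<le>M. g k) = (\<Sum>k=0..n. g k)"
      by (rule sum_pad) (use assms False in \<open>auto simp: g_def M_def\<close>)
    also have "\<dots> = (\<Sum>j=0..n. g (n - j))"
      using sum_rev_ivl[of 0 n n g] by simp
    finally show ?thesis using False by simp
  qed
  also have "\<dots> = (\<Sum>k = (if l = 0 then 1 else 0)..n. of_nat (n choose k) * of_nat (n choose (k + l - 1)) * E (k + l - 1) x * E (n - k) y)"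
  proof (rule sum.cong[OF refl])
    fix j assume "j \<in> {(if l = 0 then 1 else 0)..n}"
    hence j: "j \<le> n" "l = 0 \<Longrightarrow> j \<ge> 1" by (auto split: if_splits)
    have "M - (n - j) = j + l - 1" using j assms by (cases "l = 0") (auto simp: M_def)
    moreover have "n choose (n - j) = n choose j" using j by (simp add: binomial_symmetric[symmetric])
    ultimately show "g (n - j) = of_nat (n choose j) * of_nat (n choose (j + l - 1)) * E (j + l - 1) x * E (n - j) y"
      by (simp add: g_def)
  qed
  finally show ?thesis by (simp add: M_def)
qed

lemma cor1_b:
  assumes "l < n"
  shows "FF (n+l) (of_nat n) (of_nat l - of_nat n - 1) B E y (x-y) = (-1)^(n+l) *
     (\<Sum>k = 0..n. of_nat (n choose k) * of_nat ((k + n) choose (k + l)) * B (k + l) y * E (n - k) (x - y))"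
proof -
  define N where "N = n + l"
  define h where "h k = of_nat (n choose k) * of_nat ((2*n - k) choose (N-k)) * B (N-k) y * E k (x-y)" for k
  have "FF N (of_nat n) (of_nat l - of_nat n - 1) B E y (x-y) = (\<Sum>k\<le>N. (-1)^N * h k)"
    unfolding FF_def
  proof (rule sum.cong[OF refl])
    fix k assume "k \<in> {..N}"
    hence k: "k \<le> N" by simp
    show "(-1)^k * (of_nat n gchoose k) * ((of_nat l - of_nat n - 1) gchoose (N-k)) * B (N-k) y * E k (x-y) = (-1)^N * h k"
    proof (cases "k \<le> n")
      case True
      have "of_nat (N-k) - (of_nat l - of_nat n - 1) - 1 = (of_nat (2*n - k) :: complex)"
        using True assms k by (simp add: N_def of_nat_diff)
      from gneg[OF this] show ?thesis
        using m1pow[OF k] unfolding h_def binomial_gbinomial[symmetric] by (simp add: mult_ac)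
    next
      case False
      then show ?thesis by (simp add: h_def binomial_gbinomial[symmetric])
    qed
  qed
  also have "\<dots> = (-1)^N * (\<Sum>k\<le>N. h k)" by (simp add: sum_distrib_left)
  also have "(\<Sum>k\<le>N. h k) = (\<Sum>k=0..n. h k)"
    by (rule sum_pad) (use assms in \<open>auto simp: h_def N_def\<close>)
  also have "\<dots> = (\<Sum>j=0..n. h (n - j))"
    using sum_rev_ivl[of 0 n n h] assms by simp
  also have "\<dots> = (\<Sum>k = 0..n. of_nat (n choose k) * of_nat ((k + n) choose (k + l)) * B (k + l) y * E (n - k) (x - y))"
  proof (rule sum.cong[OF refl])
    fix j assume "j \<in> {0..n}"
    hence j: "j \<le> n" by simp
    have "N - (n - j) = j + l" using j assms by (simp add: N_def)
    moreover have "2*n - (n - j) = j + n" using j by simp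
    moreover have "n choose (n - j) = n choose j" using j by (simp add: binomial_symmetric[symmetric])
    ultimately show "h (n - j) = of_nat (n choose j) * of_nat ((j + n) choose (j + l)) * B (j + l) y * E (n - j) (x - y)"
      by (simp add: h_def)
  qed
  finally show ?thesis by (simp add: N_def)
qed

lemma cor1_c:
  assumes "l < n"
  shows "FF (n+l) (of_nat l - of_nat n - 1) (of_nat n) E B (x-y) (1-x) = (-1)^(n+l) *
     (\<Sum>k = 0..n. of_nat (n choose k) * of_nat ((k + n) choose (k + l)) * ((-1) ^ (n - k) * B (k + l) x) * E (n - k) (x - y))"
proof -
  define N where "N = n + l"
  define q where "q k = (-1)^k * of_nat ((k + n - l) choose k) * of_nat (n choose (N-k)) * E (N-k) (x-y) * B k x" for k
  have "FF N (of_nat l - of_nat n - 1) (of_nat n) E B (x-y) (1-x) = (\<Sum>k\<le>N. q k)"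
    unfolding FF_def
  proof (rule sum.cong[OF refl])
    fix k assume "k \<in> {..N}"
    hence k: "k \<le> N" by simp
    show "(-1)^k * ((of_nat l - of_nat n - 1) gchoose k) * (of_nat n gchoose (N-k)) * E (N-k) (x-y) * B k (1-x) = q k"
    proof (cases "l \<le> k")
      case True
      have "of_nat k - (of_nat l - of_nat n - 1) - 1 = (of_nat (k + n - l) :: complex)"
        using True assms k by (simp add: N_def of_nat_diff)
      from gneg[OF this] have g: "((of_nat l - of_nat n - 1 :: complex) gchoose k) = (-1)^k * of_nat ((k + n - l) choose k)" .
      show ?thesis unfolding q_def g B_refl binomial_gbinomial[symmetric]
        by (simp add: mult_ac)
    next
      case False
      hence "n < N - k" using k by (simp add: N_def)
      then show ?thesis by (simp add: q_def binomial_gbinomial[symmetric])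
    qed
  qed
  also have "(\<Sum>k\<le>N. q k) = (\<Sum>k=l..n+l. q k)"
    by (rule sum_pad) (use assms in \<open>auto simp: q_def N_def\<close>)
  also have "\<dots> = (\<Sum>j=0..n. q (j + l))"
    using sum.shift_bounds_cl_nat_ivl[of q 0 l n] by simp
  also have "\<dots> = (\<Sum>j = 0..n. (-1)^N * (of_nat (n choose j) * of_nat ((j + n) choose (j + l)) * ((-1) ^ (n - j) * B (j + l) x) * E (n - j) (x - y)))"
  proof (rule sum.cong[OF refl])
    fix j assume "j \<in> {0..n}"
    hence j: "j \<le> n" by simp
    have "N - (j + l) = n - j" using j by (simp add: N_def)
    moreover have "j + l + n - l = j + n" by simp
    moreover have "n choose (n - j) = n choose j" using j by (simp add: binomial_symmetric[symmetric])
    moreover have "(-1::complex)^(j+l) = (-1)^N * (-1)^(n-j)"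
    proof -
      have e: "N + (n - j) = (j + l) + ((n - j) + (n - j))" using j by (simp add: N_def)
      have "(-1::complex)^N * (-1)^(n-j) = (-1)^(j+l) * ((-1)^(n-j) * (-1)^(n-j))"
        by (simp only: power_add[symmetric] e)
      also have "\<dots> = (-1)^(j+l)" by (simp add: power_add[symmetric])
      finally show ?thesis by simp
    qed
    ultimately show "q (j + l) = (-1)^N * (of_nat (n choose j) * of_nat ((j + n) choose (j + l)) * ((-1) ^ (n - j) * B (j + l) x) * E (n - j) (x - y))"
      by (simp add: q_def mult_ac)
  qed
  finally show ?thesis by (simp add: N_def sum_distrib_left)
qed

lemma cor1:
  fixes n l :: nat and x y :: complex
  assumes "n > l"
  shows "of_nat (n - l + 1) / 2 *
      (\<Sum>k = (if l = 0 then 1 else 0)..n. of_nat (n choose k) * of_nat (n choose (k + l - 1))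
          * euler_poly (k + l - 1) x * euler_poly (n - k) y)
    = (\<Sum>k = 0..n. of_nat (n choose k) * of_nat ((k + n) choose (k + l))
          * ((-1) ^ (n - k) * bernoulli_poly (k + l) x - bernoulli_poly (k + l) y)
          * euler_poly (n - k) (x - y))"
proof -
  define S where "S = (\<Sum>k = (if l = 0 then 1 else 0)..n. of_nat (n choose k) * of_nat (n choose (k + l - 1)) * E (k + l - 1) x * E (n - k) y)"
  define Ry where "Ry = (\<Sum>k = 0..n. of_nat (n choose k) * of_nat ((k + n) choose (k + l)) * B (k + l) y * E (n - k) (x - y))"
  define Rx where "Rx = (\<Sum>k = 0..n. of_nat (n choose k) * of_nat ((k + n) choose (k + l)) * ((-1) ^ (n - k) * B (k + l) x) * E (n - k) (x - y))"
  define M where "M = n + l - 1"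
  define \<sigma> where "\<sigma> = ((-1)^M :: complex)"
  have \<sigma>: "\<sigma> \<noteq> 0" by (simp add: \<sigma>_def)
  have SM: "Suc M = n + l" using assms by (simp add: M_def)
  have \<sigma>N: "(-1)^(n+l) = - \<sigma>" unfolding SM[symmetric] \<sigma>_def by simp
  define r where "r = (of_nat l - of_nat n - 1 :: complex)"
  have "GE M r (of_nat n) (of_nat n) (1-x) y = 0"
    by (rule GE_zero) (use assms in \<open>simp add: M_def r_def of_nat_diff\<close>)
  moreover have "GE M r (of_nat n) (of_nat n) (1-x) y =
     r / 2 * FF (n+l-1) (of_nat n) (of_nat n) E E (1-x) y + FF (n+l) (of_nat n) (of_nat l - of_nat n - 1) B E y (x-y)
     - FF (n+l) (of_nat l - of_nat n - 1) (of_nat n) E B (x-y) (1-x)"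
    by (simp only: GE_def SM) (simp add: r_def M_def)
  ultimately have "r / 2 * (\<sigma> * S) + (- \<sigma>) * Ry - (- \<sigma>) * Rx = 0"
    unfolding cor1_a[OF assms] cor1_b[OF assms] cor1_c[OF assms] S_def Ry_def Rx_def \<sigma>N
    by (simp add: \<sigma>_def M_def)
  hence "\<sigma> * (r / 2 * S - Ry + Rx) = 0" by (simp add: algebra_simps)
  hence "r / 2 * S - Ry + Rx = 0" using \<sigma> by simp
  hence e: "- r / 2 * S = Rx - Ry" by (simp add: algebra_simps eq_neg_iff_add_eq_0[symmetric])
  have "(\<Sum>k = 0..n. of_nat (n choose k) * of_nat ((k + n) choose (k + l))
          * ((-1) ^ (n - k) * B (k + l) x - B (k + l) y) * E (n - k) (x - y)) = Rx - Ry"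
    unfolding Rx_def Ry_def by (simp add: sum_subtractf[symmetric] algebra_simps)
  moreover have "of_nat (n - l + 1) = - r" using assms by (simp add: r_def of_nat_diff)
  ultimately show ?thesis using e unfolding S_def by simp
qed

lemma cor3_term:
  assumes "k < n"
  shows "of_nat (Suc n) / 4 * (of_nat (n choose k) * C * ((-1)^(n-k) * b - b) * E (n-k) 0)
     = of_nat (Suc n choose k) * C * b * (2^(n-k+1) - 1) * bn (n-k+1)"
proof -
  define m where "m = n - k"
  have m: "m \<ge> 1" "Suc n - k = Suc m" using assms by (auto simp: m_def)
  have a: "of_nat (Suc n) * of_nat (n choose k) = of_nat (Suc n choose k) * (of_nat (Suc m) :: complex)"
  proof -
    have "(Suc n - k) * (Suc n choose k) = Suc n * (n choose k)" using binomial_absorb_comp[of "Suc n" k] by simp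
    hence "of_nat (Suc m * (Suc n choose k)) = (of_nat (Suc n * (n choose k)) :: complex)" using m by simp
    thus ?thesis by (simp only: of_nat_mult mult_ac)
  qed
  have e: "of_nat (Suc m) * E m 0 = - 2 * (2^(Suc m) - 1) * bn (Suc m)" by (rule E_at0)
  have "of_nat (Suc n) / 4 * (of_nat (n choose k) * C * ((-1)^(n-k) * b - b) * E (n-k) 0)
     = (of_nat (Suc n) * of_nat (n choose k)) / 4 * C * ((-1)^m - 1) * b * E m 0"
    by (simp add: m_def field_simps)
  also have "\<dots> = of_nat (Suc n choose k) / 4 * C * ((-1)^m - 1) * b * (of_nat (Suc m) * E m 0)"
    unfolding a by (simp add: algebra_simps)
  also have "\<dots> = of_nat (Suc n choose k) * C * b * (2^(Suc m) - 1) * bn (Suc m) * ((1 - (-1)^m) / 2)"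
    unfolding e by (simp add: field_simps)
  also have "\<dots> = of_nat (Suc n choose k) * C * b * (2^(Suc m) - 1) * bn (Suc m)"
  proof (cases "even m")
    case True
    have "bernoulli_num (Suc m) = 0" using bn_odd[of "Suc m"] True m by simp
    then show ?thesis by simp
  next
    case False then show ?thesis by simp
  qed
  finally show ?thesis by (simp add: m_def)
qed

lemma cor3:
  fixes n l :: nat and x :: complex
  assumes "n > l"
  shows "of_nat ((n + 1) * (n + 1 - l)) / 8 *
      (\<Sum>k = (if l = 0 then 1 else 0)..n. of_nat (n choose k) * of_nat (n choose (k + l - 1))
          * euler_poly (k + l - 1) x * euler_poly (n - k) x)
    = (\<Sum>k = 0..n - 1. of_nat ((n + 1) choose k) * of_nat ((k + n) choose (k + l))
          * bernoulli_poly (k + l) x * (2 ^ (n - k + 1) - 1) * of_rat (bernoulli_num (n - k + 1)))"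
proof -
  define S where "S = (\<Sum>k = (if l = 0 then 1 else 0)..n. of_nat (n choose k) * of_nat (n choose (k + l - 1)) * E (k + l - 1) x * E (n - k) x)"
  define T where "T k = of_nat (n choose k) * of_nat ((k + n) choose (k + l)) * ((-1) ^ (n - k) * B (k + l) x - B (k + l) x) * E (n - k) 0" for k
  have c1: "of_nat (n - l + 1) / 2 * S = (\<Sum>k = 0..n. T k)"
    using cor1[OF assms, of x x] unfolding S_def T_def by simp
  obtain m where nm: "n = Suc m" using assms by (cases n) auto
  have "(\<Sum>k = 0..n. T k) = (\<Sum>k = 0..n-1. T k) + T n"
    using nm by (simp add: sum.atLeast0_atMost_Suc)
  also have "T n = 0" by (simp add: T_def)
  finally have c2: "(\<Sum>k = 0..n. T k) = (\<Sum>k = 0..n-1. T k)" by simp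
  have "of_nat ((n + 1) * (n + 1 - l)) / 8 * S = of_nat (Suc n) / 4 * (of_nat (n - l + 1) / 2 * S)"
  proof -
    have "n + 1 - l = n - l + 1" using assms by simp
    thus ?thesis by (simp add: field_simps)
  qed
  also have "\<dots> = (\<Sum>k = 0..n-1. of_nat (Suc n) / 4 * T k)" unfolding c1 c2 by (simp add: sum_distrib_left)
  also have "\<dots> = (\<Sum>k = 0..n - 1. of_nat ((n + 1) choose k) * of_nat ((k + n) choose (k + l))
          * B (k + l) x * (2 ^ (n - k + 1) - 1) * bn (n - k + 1))"
  proof (rule sum.cong[OF refl])
    fix k assume "k \<in> {0..n-1}"
    hence k: "k < n" using nm by auto
    show "of_nat (Suc n) / 4 * T k = of_nat ((n + 1) choose k) * of_nat ((k + n) choose (k + l))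
          * B (k + l) x * (2 ^ (n - k + 1) - 1) * bn (n - k + 1)"
      unfolding T_def using cor3_term[OF k, of "of_nat ((k + n) choose (k + l))" "B (k + l) x"] by simp
  qed
  finally show ?thesis unfolding S_def .
qed

lemma cor4:
  fixes n l :: nat and x :: complex
  assumes "n > l"
  shows "(\<Sum>k = 0..n - l. of_nat (n choose k) * of_nat (n choose (k + l))
          * bernoulli_poly (k + l) x * bernoulli_poly (n - k) x)
    = of_nat (2 * n) / of_nat (n - l) *
      (\<Sum>k \<in> {0..n} - {n - 1}. of_nat (n choose k) * of_nat ((k + n - 1) choose (k + l))
          * bernoulli_poly (k + l) x * of_rat (bernoulli_num (n - k)))"
proof -
  define S where "S = (\<Sum>k = 0..n - l. of_nat (n choose k) * of_nat (n choose (k + l)) * B (k + l) x * B (n - k) x)"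
  define U where "U = (\<Sum>k \<in> {0..n} - {n - 1}. of_nat (n choose k) * of_nat ((k + n - 1) choose (k + l)) * B (k + l) x * bn (n - k))"
  define T where "T k = of_nat (n choose k) * of_nat ((k + n - 1) choose (k + l)) * ((-1) ^ (n - k) * B (k + l) x + B (k + l) x) * B (n - k) 0" for k
  have c2: "of_nat (n - l) / of_nat n * S = (\<Sum>k = 0..n. T k)"
    using cor2[OF assms, of x x] unfolding S_def T_def by simp
  have "(\<Sum>k = 0..n. T k) = T (n - 1) + (\<Sum>k \<in> {0..n} - {n-1}. T k)"
    by (rule sum.remove) auto
  also have "T (n - 1) = 0"
  proof -
    have "n - (n - 1) = 1" using assms by simp
    thus ?thesis by (simp add: T_def)
  qed
  also have "(\<Sum>k \<in> {0..n} - {n-1}. T k) = 2 * U"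
    unfolding U_def sum_distrib_left
  proof (rule sum.cong[OF refl])
    fix k assume "k \<in> {0..n} - {n-1}"
    hence k: "k \<le> n" "n - k \<noteq> 1" by auto
    show "T k = 2 * (of_nat (n choose k) * of_nat ((k + n - 1) choose (k + l)) * B (k + l) x * bn (n - k))"
    proof (cases "even (n - k)")
      case True then show ?thesis by (simp add: T_def B_at0 algebra_simps)
    next
      case False
      have "bernoulli_num (n - k) = 0" using bn_odd[OF False k(2)] .
      then show ?thesis by (simp add: T_def B_at0)
    qed
  qed
  finally have e: "of_nat (n - l) / of_nat n * S = 2 * U" using c2 by simp
  have nz: "(of_nat n :: complex) \<noteq> 0" "(of_nat (n - l) :: complex) \<noteq> 0" using assms by auto
  have "S = of_nat (2 * n) / of_nat (n - l) * U"
    using e nz by (simp add: field_simps)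
  thus ?thesis unfolding S_def U_def .
qed


theorem corollary1p2:
  fixes n l :: nat and x y :: complex
  assumes "n > l"
  shows
   "(of_nat (n - l + 1) / 2 *
      (\<Sum>k = (if l = 0 then 1 else 0)..n. of_nat (n choose k) * of_nat (n choose (k + l - 1))
          * euler_poly (k + l - 1) x * euler_poly (n - k) y)
    = (\<Sum>k = 0..n. of_nat (n choose k) * of_nat ((k + n) choose (k + l))
          * ((-1) ^ (n - k) * bernoulli_poly (k + l) x - bernoulli_poly (k + l) y)
          * euler_poly (n - k) (x - y))) \<and>
    (of_nat (n - l) / of_nat n *
      (\<Sum>k = 0..n - l. of_nat (n choose k) * of_nat (n choose (k + l))
          * bernoulli_poly (k + l) x * bernoulli_poly (n - k) y)
    = (\<Sum>k = 0..n. of_nat (n choose k) * of_nat ((k + n - 1) choose (k + l))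
          * ((-1) ^ (n - k) * bernoulli_poly (k + l) x + bernoulli_poly (k + l) y)
          * bernoulli_poly (n - k) (x - y))) \<and>
    (of_nat ((n + 1) * (n + 1 - l)) / 8 *
      (\<Sum>k = (if l = 0 then 1 else 0)..n. of_nat (n choose k) * of_nat (n choose (k + l - 1))
          * euler_poly (k + l - 1) x * euler_poly (n - k) x)
    = (\<Sum>k = 0..n - 1. of_nat ((n + 1) choose k) * of_nat ((k + n) choose (k + l))
          * bernoulli_poly (k + l) x * (2 ^ (n - k + 1) - 1) * of_rat (bernoulli_num (n - k + 1)))) \<and>
    ((\<Sum>k = 0..n - l. of_nat (n choose k) * of_nat (n choose (k + l))
          * bernoulli_poly (k + l) x * bernoulli_poly (n - k) x)
    = of_nat (2 * n) / of_nat (n - l) *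
      (\<Sum>k \<in> {0..n} - {n - 1}. of_nat (n choose k) * of_nat ((k + n - 1) choose (k + l))
          * bernoulli_poly (k + l) x * of_rat (bernoulli_num (n - k))))"
  proof -
  have n: "n > l" by (rule assms)
  show ?thesis
    using cor1[OF n, of x y] cor2[OF n, of x y] cor3[OF n, of x] cor4[OF n, of x] by blast
qed

end
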